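(* Let $(R,\mathfrak m)$ be a Noetherian local ring and $M$ a finitely generated $R$-module with $\dim M=d\ge 1$. Let $k$ and $\ell$ be two positive integers. Then there exists an integer $n_3>\ell$ such that $$(\mathfrak m^{n_3}M+H^0_{\mathfrak m}(M)):_M\mathfrak m^{k}\subseteq \mathfrak m^{\ell}M+H^0_{\mathfrak m}(M).$$
   Context: For a submodule $N\subseteq M$ and an ideal $J$, $N:_MJ=\{x\in M: Jx\subseteq N\}$. $H^0_{\mathfrak m}(M)$ is the submodule of elements of $M$ annihilated by some power of $\mathfrak m$. *)

theory Defs
  imports "HOL-Algebra.Algebra" "HOL-Library.Extended_Nat"
begin

definition local_ring :: "('a, 'b) ring_scheme \<Rightarrow> 'a set \<Rightarrow> bool" where
  "local_ring R m \<longleftrightarrow> cring R \<and> maximalideal m R \<and> (\<forall>I. maximalideal I R \<longrightarrow> I = m)"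

fun ideal_pow :: "('a, 'b) ring_scheme \<Rightarrow> 'a set \<Rightarrow> nat \<Rightarrow> 'a set" where
  "ideal_pow R I 0 = carrier R"
| "ideal_pow R I (Suc n) = ideal_prod R I (ideal_pow R I n)"

inductive_set ideal_smult :: "('a, 'b) ring_scheme \<Rightarrow> ('a, 'c, 'd) module_scheme \<Rightarrow> 'a set \<Rightarrow> 'c set \<Rightarrow> 'c set"
  for R M I N where
    zero: "\<zero>\<^bsub>M\<^esub> \<in> ideal_smult R M I N"
  | gen: "\<lbrakk> a \<in> I; x \<in> N \<rbrakk> \<Longrightarrow> a \<odot>\<^bsub>M\<^esub> x \<in> ideal_smult R M I N"
  | add: "\<lbrakk> u \<in> ideal_smult R M I N; v \<in> ideal_smult R M I N \<rbrakk> \<Longrightarrow> u \<oplus>\<^bsub>M\<^esub> v \<in> ideal_smult R M I N"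

definition submod_sum :: "('a, 'c, 'd) module_scheme \<Rightarrow> 'c set \<Rightarrow> 'c set \<Rightarrow> 'c set" where
  "submod_sum M A B = {x \<oplus>\<^bsub>M\<^esub> y | x y. x \<in> A \<and> y \<in> B}"

definition submod_colon :: "('a, 'c, 'd) module_scheme \<Rightarrow> 'c set \<Rightarrow> 'a set \<Rightarrow> 'c set" where
  "submod_colon M N J = {x \<in> carrier M. \<forall>a \<in> J. a \<odot>\<^bsub>M\<^esub> x \<in> N}"

definition H0 :: "('a, 'b) ring_scheme \<Rightarrow> ('a, 'c, 'd) module_scheme \<Rightarrow> 'a set \<Rightarrow> 'c set" where
  "H0 R M m = {x \<in> carrier M. \<exists>n. \<forall>a \<in> ideal_pow R m n. a \<odot>\<^bsub>M\<^esub> x = \<zero>\<^bsub>M\<^esub>}"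

definition fin_gen_module :: "('a, 'b) ring_scheme \<Rightarrow> ('a, 'c, 'd) module_scheme \<Rightarrow> bool" where
  "fin_gen_module R M \<longleftrightarrow> (\<exists>S. finite S \<and> S \<subseteq> carrier M \<and>
     carrier M = {finsum M (\<lambda>s. f s \<odot>\<^bsub>M\<^esub> s) S | f. f \<in> S \<rightarrow> carrier R})"

text \<open>Annihilator and Krull dimension dim M = dim R/Ann(M) (supremum of lengths of
  chains of prime ideals containing Ann M).\<close>
definition annihilator :: "('a, 'b) ring_scheme \<Rightarrow> ('a, 'c, 'd) module_scheme \<Rightarrow> 'a set" where
  "annihilator R M = {a \<in> carrier R. \<forall>x \<in> carrier M. a \<odot>\<^bsub>M\<^esub> x = \<zero>\<^bsub>M\<^esub>}"

definition prime_chain_over :: "('a, 'b) ring_scheme \<Rightarrow> 'a set \<Rightarrow> (nat \<Rightarrow> 'a set) \<Rightarrow> nat \<Rightarrow> bool" where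
  "prime_chain_over R A P n \<longleftrightarrow> (\<forall>i \<le> n. primeideal (P i) R \<and> A \<subseteq> P i) \<and> (\<forall>i < n. P i \<subset> P (Suc i))"

definition module_dim :: "('a, 'b) ring_scheme \<Rightarrow> ('a, 'c, 'd) module_scheme \<Rightarrow> enat" where
  "module_dim R M = Sup {enat n | n. \<exists>P. prime_chain_over R (annihilator R M) P n}"

end

theory Submission
  imports Defs
begin



lemma (in cring) ideal_by_closure:
  assumes "S \<subseteq> carrier R" "\<zero> \<in> S" "\<And>x y. x \<in> S \<Longrightarrow> y \<in> S \<Longrightarrow> x \<oplus> y \<in> S"
    "\<And>r x. r \<in> carrier R \<Longrightarrow> x \<in> S \<Longrightarrow> r \<otimes> x \<in> S"
  shows "ideal S R"
proof (rule idealI)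
  show "ring R" by (rule ring_axioms)
  show "subgroup S (add_monoid R)"
  proof
    show "S \<subseteq> carrier (add_monoid R)" using assms(1) by simp
    show "\<one>\<^bsub>add_monoid R\<^esub> \<in> S" using assms(2) by simp
    fix x y assume "x \<in> S" "y \<in> S"
    then show "x \<otimes>\<^bsub>add_monoid R\<^esub> y \<in> S" using assms(3) by simp
  next
    fix x assume x: "x \<in> S"
    then have xc: "x \<in> carrier R" using assms(1) by blast
    have "inv\<^bsub>add_monoid R\<^esub> x = (\<ominus> \<one>) \<otimes> x"
      using xc by (simp add: a_inv_def[symmetric] l_minus)
    also have "\<dots> \<in> S" using assms(4) x by simp
    finally show "inv\<^bsub>add_monoid R\<^esub> x \<in> S" .
  qed
next
  fix a x assume "a \<in> S" "x \<in> carrier R"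
  then show "x \<otimes> a \<in> S" using assms(4) by blast
  then show "a \<otimes> x \<in> S" using \<open>a \<in> S\<close> \<open>x \<in> carrier R\<close> assms(1) m_comm by (metis subsetD)
qed

lemma ideal_sub_carrier: assumes "ideal I R" shows "I \<subseteq> carrier R"
proof
  fix x assume "x \<in> I" then show "x \<in> carrier R" by (rule ideal.Icarr[OF assms])
qed

lemma (in ring) ideal_pow_ideal: "ideal I R \<Longrightarrow> ideal (ideal_pow R I n) R"
  by (induction n) (auto intro: oneideal ideal_prod_is_ideal)

lemma (in ring) ideal_pow_Suc_sub: "ideal I R \<Longrightarrow> ideal_pow R I (Suc n) \<subseteq> ideal_pow R I n"
  using ideal_prod_inter[of I "ideal_pow R I n"] ideal_pow_ideal[of I n] by auto

lemma (in ring) ideal_pow_antimono: assumes "ideal I R" "n \<le> n'" shows "ideal_pow R I n' \<subseteq> ideal_pow R I n"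
  using assms(2)
proof (induction n' rule: dec_induct)
  case base then show ?case by simp
next
  case (step k) then show ?case using ideal_pow_Suc_sub[of I k] assms(1) by blast
qed

lemma (in ring) ideal_prod_mono:
  assumes "I \<subseteq> I'" "K \<subseteq> K'" shows "ideal_prod R I K \<subseteq> ideal_prod R I' K'"
proof
  fix x assume "x \<in> ideal_prod R I K"
  then show "x \<in> ideal_prod R I' K'"
  proof (induction x rule: ideal_prod.induct)
    case (prod i j) then show ?case using assms by (blast intro: ideal_prod.prod)
  next
    case (sum s1 s2) then show ?case by (blast intro: ideal_prod.sum)
  qed
qed

lemma (in ring) ideal_pow_mono: "I \<subseteq> I' \<Longrightarrow> ideal_pow R I n \<subseteq> ideal_pow R I' n"
  by (induction n) (auto intro: ideal_prod_mono[THEN subsetD])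

lemma (in ring) pow_in_ideal_pow:
  assumes "a \<in> I" "I \<subseteq> carrier R" shows "a [^] n \<in> ideal_pow R I n"
proof (induction n)
  case 0 then show ?case by simp
next
  case (Suc n)
  have "a \<otimes> a [^] n \<in> ideal_prod R I (ideal_pow R I n)"
    using assms Suc by (auto intro: ideal_prod.prod)
  moreover have "a [^] Suc n = a \<otimes> a [^] n" using assms by (intro nat_pow_Suc2) blast
  ultimately show ?case by simp
qed

context module
begin

definition subm :: "'c set \<Rightarrow> bool" where
  "subm N \<longleftrightarrow> N \<subseteq> carrier M \<and> \<zero>\<^bsub>M\<^esub> \<in> N \<and> (\<forall>x\<in>N. \<forall>y\<in>N. x \<oplus>\<^bsub>M\<^esub> y \<in> N)
     \<and> (\<forall>a\<in>carrier R. \<forall>x\<in>N. a \<odot>\<^bsub>M\<^esub> x \<in> N)"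

lemma submI:
  assumes "N \<subseteq> carrier M" "\<zero>\<^bsub>M\<^esub> \<in> N" "\<And>x y. x \<in> N \<Longrightarrow> y \<in> N \<Longrightarrow> x \<oplus>\<^bsub>M\<^esub> y \<in> N"
    "\<And>a x. a \<in> carrier R \<Longrightarrow> x \<in> N \<Longrightarrow> a \<odot>\<^bsub>M\<^esub> x \<in> N"
  shows "subm N" using assms unfolding subm_def by blast

lemma subm_carr: "subm N \<Longrightarrow> N \<subseteq> carrier M" unfolding subm_def by blast
lemma subm_zero: "subm N \<Longrightarrow> \<zero>\<^bsub>M\<^esub> \<in> N" unfolding subm_def by blast
lemma subm_add: "subm N \<Longrightarrow> x \<in> N \<Longrightarrow> y \<in> N \<Longrightarrow> x \<oplus>\<^bsub>M\<^esub> y \<in> N" unfolding subm_def by blast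
lemma subm_smult: "subm N \<Longrightarrow> a \<in> carrier R \<Longrightarrow> x \<in> N \<Longrightarrow> a \<odot>\<^bsub>M\<^esub> x \<in> N" unfolding subm_def by blast

lemma neg_smult: "x \<in> carrier M \<Longrightarrow> \<ominus>\<^bsub>M\<^esub> x = (\<ominus> \<one>) \<odot>\<^bsub>M\<^esub> x"
  using smult_l_minus[of \<one> x] by simp

lemma subm_neg: "subm N \<Longrightarrow> x \<in> N \<Longrightarrow> \<ominus>\<^bsub>M\<^esub> x \<in> N"
  using neg_smult[of x] subm_carr[of N] subm_smult[of N "\<ominus> \<one>" x] by auto

lemma subm_diff: "subm N \<Longrightarrow> x \<in> N \<Longrightarrow> y \<in> N \<Longrightarrow> x \<ominus>\<^bsub>M\<^esub> y \<in> N"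
  unfolding a_minus_def using subm_neg subm_add by blast

lemma subm_carrier: "subm (carrier M)"
  by (rule submI) auto

lemma ideal_smult_carr:
  assumes "I \<subseteq> carrier R" "Q \<subseteq> carrier M" shows "ideal_smult R M I Q \<subseteq> carrier M"
proof
  fix x assume "x \<in> ideal_smult R M I Q"
  then show "x \<in> carrier M" by induction (use assms in auto)
qed

lemma ideal_smult_least:
  assumes "subm Z" "\<And>a x. a \<in> I \<Longrightarrow> x \<in> Q \<Longrightarrow> a \<odot>\<^bsub>M\<^esub> x \<in> Z"
  shows "ideal_smult R M I Q \<subseteq> Z"
proof
  fix x assume "x \<in> ideal_smult R M I Q"
  then show "x \<in> Z" by induction (use assms subm_zero subm_add in auto)
qed

lemma ideal_smult_subm:
  assumes "ideal I R" "Q \<subseteq> carrier M" shows "subm (ideal_smult R M I Q)"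
proof (rule submI)
  have Ic: "I \<subseteq> carrier R" using assms(1) by (rule ideal_sub_carrier)
  show "ideal_smult R M I Q \<subseteq> carrier M" by (rule ideal_smult_carr[OF Ic assms(2)])
  show "\<zero>\<^bsub>M\<^esub> \<in> ideal_smult R M I Q" by (rule ideal_smult.zero)
  show "\<And>x y. x \<in> ideal_smult R M I Q \<Longrightarrow> y \<in> ideal_smult R M I Q \<Longrightarrow> x \<oplus>\<^bsub>M\<^esub> y \<in> ideal_smult R M I Q"
    by (rule ideal_smult.add)
  fix r x assume r: "r \<in> carrier R" and x: "x \<in> ideal_smult R M I Q"
  from x show "r \<odot>\<^bsub>M\<^esub> x \<in> ideal_smult R M I Q"
  proof induction
    case zero then show ?case using r by (simp add: ideal_smult.zero)
  next
    case (gen a y)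
    have yc: "y \<in> carrier M" "a \<in> carrier R" using gen Ic assms(2) by auto
    have "r \<odot>\<^bsub>M\<^esub> (a \<odot>\<^bsub>M\<^esub> y) = (r \<otimes> a) \<odot>\<^bsub>M\<^esub> y"
      using r yc by (simp add: smult_assoc1)
    moreover have "r \<otimes> a \<in> I" using ideal.I_l_closed[OF assms(1) gen(1) r] .
    ultimately show ?case using ideal_smult.gen[of "r \<otimes> a" I y Q] gen by simp
  next
    case (add u v)
    have "u \<in> carrier M" "v \<in> carrier M"
      using add ideal_smult_carr[OF Ic assms(2)] by auto
    then have "r \<odot>\<^bsub>M\<^esub> (u \<oplus>\<^bsub>M\<^esub> v) = r \<odot>\<^bsub>M\<^esub> u \<oplus>\<^bsub>M\<^esub> r \<odot>\<^bsub>M\<^esub> v"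
      using r by (simp add: smult_r_distr)
    then show ?case using add ideal_smult.add by metis
  qed
qed

lemma ideal_smult_mono:
  assumes "I \<subseteq> I'" "Q \<subseteq> Q'" shows "ideal_smult R M I Q \<subseteq> ideal_smult R M I' Q'"
proof
  fix x assume "x \<in> ideal_smult R M I Q"
  then show "x \<in> ideal_smult R M I' Q'"
  proof induction
    case zero then show ?case by (rule ideal_smult.zero)
  next
    case (gen a x) then show ?case using assms by (blast intro: ideal_smult.gen)
  next
    case (add u v) then show ?case by (blast intro: ideal_smult.add)
  qed
qed

lemma ideal_smult_in_subm:
  assumes "subm Q" "ideal I R" shows "ideal_smult R M I Q \<subseteq> Q"
  using assms ideal_sub_carrier[OF assms(2)] by (intro ideal_smult_least) (auto intro: subm_smult)

lemma ideal_smult_carrierR: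
  assumes "subm Q" shows "ideal_smult R M (carrier R) Q = Q"
proof
  show "ideal_smult R M (carrier R) Q \<subseteq> Q" using assms oneideal by (rule ideal_smult_in_subm)
  show "Q \<subseteq> ideal_smult R M (carrier R) Q"
  proof
    fix x assume "x \<in> Q"
    then have "\<one> \<odot>\<^bsub>M\<^esub> x \<in> ideal_smult R M (carrier R) Q" by (intro ideal_smult.gen) auto
    then show "x \<in> ideal_smult R M (carrier R) Q" using \<open>x \<in> Q\<close> subm_carr[OF assms] by auto
  qed
qed

lemma ideal_smult_prod_sub:
  assumes "ideal I R" "ideal K R" "Q \<subseteq> carrier M"
  shows "ideal_smult R M (ideal_prod R I K) Q \<subseteq> ideal_smult R M I (ideal_smult R M K Q)"
proof (rule ideal_smult_least)
  have Kc: "K \<subseteq> carrier R" "I \<subseteq> carrier R" using ideal_sub_carrier[OF assms(2)] ideal_sub_carrier[OF assms(1)] by simp_all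
  show "subm (ideal_smult R M I (ideal_smult R M K Q))"
    using assms Kc by (intro ideal_smult_subm ideal_smult_carr) auto
  fix a x assume a: "a \<in> ideal_prod R I K" and x: "x \<in> Q"
  then show "a \<odot>\<^bsub>M\<^esub> x \<in> ideal_smult R M I (ideal_smult R M K Q)"
  proof induction
    case (prod i j)
    then have "(i \<otimes> j) \<odot>\<^bsub>M\<^esub> x = i \<odot>\<^bsub>M\<^esub> (j \<odot>\<^bsub>M\<^esub> x)" using Kc assms(3) by (intro smult_assoc1) auto
    then show ?case using prod ideal_smult.gen by metis
  next
    case (sum s1 s2)
    have "s1 \<in> carrier R" "s2 \<in> carrier R" using sum ideal_prod_in_carrier[OF assms(1,2)] by auto
    then have "(s1 \<oplus> s2) \<odot>\<^bsub>M\<^esub> x = s1 \<odot>\<^bsub>M\<^esub> x \<oplus>\<^bsub>M\<^esub> s2 \<odot>\<^bsub>M\<^esub> x"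
      using x assms(3) by (simp add: smult_l_distr subsetD)
    then show ?case using sum ideal_smult.add by metis
  qed
qed

lemma ideal_smult_prod_sup:
  assumes "ideal I R" "ideal K R" "Q \<subseteq> carrier M"
  shows "ideal_smult R M I (ideal_smult R M K Q) \<subseteq> ideal_smult R M (ideal_prod R I K) Q"
proof (rule ideal_smult_least)
  have Kc: "K \<subseteq> carrier R" "I \<subseteq> carrier R" using ideal_sub_carrier[OF assms(2)] ideal_sub_carrier[OF assms(1)] by simp_all
  show "subm (ideal_smult R M (ideal_prod R I K) Q)"
    using assms by (intro ideal_smult_subm ideal_prod_is_ideal) auto
  fix i y assume i: "i \<in> I" and y: "y \<in> ideal_smult R M K Q"
  from y show "i \<odot>\<^bsub>M\<^esub> y \<in> ideal_smult R M (ideal_prod R I K) Q"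
  proof induction
    case zero then show ?case using i Kc by (simp add: ideal_smult.zero subsetD)
  next
    case (gen k x)
    then have "i \<odot>\<^bsub>M\<^esub> (k \<odot>\<^bsub>M\<^esub> x) = (i \<otimes> k) \<odot>\<^bsub>M\<^esub> x" using i Kc assms(3) by (intro smult_assoc1[symmetric]) auto
    then show ?case using ideal_smult.gen[OF ideal_prod.prod[OF i gen(1)] gen(2)] by simp
  next
    case (add u v)
    have "u \<in> carrier M" "v \<in> carrier M" using add ideal_smult_carr[OF Kc(1) assms(3)] by auto
    then have "i \<odot>\<^bsub>M\<^esub> (u \<oplus>\<^bsub>M\<^esub> v) = i \<odot>\<^bsub>M\<^esub> u \<oplus>\<^bsub>M\<^esub> i \<odot>\<^bsub>M\<^esub> v"
      using i Kc by (simp add: smult_r_distr subsetD)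
    then show ?case using add ideal_smult.add by metis
  qed
qed

lemma submod_sum_subm:
  assumes "subm A" "subm B" shows "subm (submod_sum M A B)"
proof (rule submI)
  note c = subm_carr[OF assms(1)] subm_carr[OF assms(2)]
  show "submod_sum M A B \<subseteq> carrier M" unfolding submod_sum_def using c by auto
  show "\<zero>\<^bsub>M\<^esub> \<in> submod_sum M A B" unfolding submod_sum_def
    using subm_zero[OF assms(1)] subm_zero[OF assms(2)] by force
  fix x y assume "x \<in> submod_sum M A B" "y \<in> submod_sum M A B"
  then obtain x1 x2 y1 y2 where "x = x1 \<oplus>\<^bsub>M\<^esub> x2" "y = y1 \<oplus>\<^bsub>M\<^esub> y2" "x1 \<in> A" "x2 \<in> B" "y1 \<in> A" "y2 \<in> B"
    unfolding submod_sum_def by blast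
  moreover have "x1 \<oplus>\<^bsub>M\<^esub> x2 \<oplus>\<^bsub>M\<^esub> (y1 \<oplus>\<^bsub>M\<^esub> y2) = (x1 \<oplus>\<^bsub>M\<^esub> y1) \<oplus>\<^bsub>M\<^esub> (x2 \<oplus>\<^bsub>M\<^esub> y2)"
  proof -
    have "x1 \<in> carrier M" "x2 \<in> carrier M" "y1 \<in> carrier M" "y2 \<in> carrier M"
      using calculation c by auto
    then show ?thesis by (simp add: M.a_ac)
  qed
  ultimately show "x \<oplus>\<^bsub>M\<^esub> y \<in> submod_sum M A B" unfolding submod_sum_def
    using subm_add[OF assms(1)] subm_add[OF assms(2)] by blast
next
  note c = subm_carr[OF assms(1)] subm_carr[OF assms(2)]
  fix a x assume a: "a \<in> carrier R" and "x \<in> submod_sum M A B"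
  then obtain x1 x2 where "x = x1 \<oplus>\<^bsub>M\<^esub> x2" "x1 \<in> A" "x2 \<in> B" unfolding submod_sum_def by blast
  then show "a \<odot>\<^bsub>M\<^esub> x \<in> submod_sum M A B" unfolding submod_sum_def
    using a c subm_smult[OF assms(1)] subm_smult[OF assms(2)] by (force simp: smult_r_distr)
qed

lemma submod_sumI: "x \<in> A \<Longrightarrow> y \<in> B \<Longrightarrow> x \<oplus>\<^bsub>M\<^esub> y \<in> submod_sum M A B"
  unfolding submod_sum_def by blast

lemma submod_sumE: "z \<in> submod_sum M A B \<Longrightarrow> (\<And>x y. x \<in> A \<Longrightarrow> y \<in> B \<Longrightarrow> z = x \<oplus>\<^bsub>M\<^esub> y \<Longrightarrow> P) \<Longrightarrow> P"
  unfolding submod_sum_def by blast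

lemma submod_sum_left: "subm B \<Longrightarrow> A \<subseteq> carrier M \<Longrightarrow> A \<subseteq> submod_sum M A B"
  using submod_sumI[of _ A "\<zero>\<^bsub>M\<^esub>" B] subm_zero by force

lemma submod_sum_right: "subm A \<Longrightarrow> B \<subseteq> carrier M \<Longrightarrow> B \<subseteq> submod_sum M A B"
  using submod_sumI[of "\<zero>\<^bsub>M\<^esub>" A _ B] subm_zero by force

lemma submod_sum_mono: "A \<subseteq> A' \<Longrightarrow> B \<subseteq> B' \<Longrightarrow> submod_sum M A B \<subseteq> submod_sum M A' B'"
  unfolding submod_sum_def by blast

end



lemma (in abelian_group) cancel_common:
  "x \<in> carrier G \<Longrightarrow> y \<in> carrier G \<Longrightarrow> z \<in> carrier G \<Longrightarrow> (x \<oplus> z) \<ominus> (y \<oplus> z) = x \<ominus> y"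
proof -
  assume c: "x \<in> carrier G" "y \<in> carrier G" "z \<in> carrier G"
  have "(x \<oplus> z) \<ominus> (y \<oplus> z) = x \<oplus> (z \<oplus> (\<ominus> y \<oplus> \<ominus> z))"
    using c by (simp add: a_minus_def minus_add a_assoc)
  also have "z \<oplus> (\<ominus> y \<oplus> \<ominus> z) = \<ominus> y \<oplus> (z \<oplus> \<ominus> z)"
    using c by (simp add: a_lcomm)
  also have "\<dots> = \<ominus> y" using c by (simp add: r_neg)
  finally show ?thesis by (simp add: a_minus_def)
qed

context module
begin

abbreviation span where "span S \<equiv> ideal_smult R M (carrier R) S"

lemma span_subm: "S \<subseteq> carrier M \<Longrightarrow> subm (span S)"
  by (rule ideal_smult_subm[OF oneideal])

lemma span_mono: "S \<subseteq> T \<Longrightarrow> span S \<subseteq> span T"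
  by (rule ideal_smult_mono) auto

lemma span_in: "subm U \<Longrightarrow> S \<subseteq> U \<Longrightarrow> span S \<subseteq> U"
  using span_mono[of S U] ideal_smult_carrierR[of U] by auto

lemma span_base: assumes "s \<in> S" "S \<subseteq> carrier M" shows "s \<in> span S"
proof -
  have "\<one> \<odot>\<^bsub>M\<^esub> s \<in> span S" by (rule ideal_smult.gen) (use assms in auto)
  then show ?thesis using assms by (simp add: subsetD)
qed

lemma span_empty: "span {} = {\<zero>\<^bsub>M\<^esub>}"
proof
  show "{\<zero>\<^bsub>M\<^esub>} \<subseteq> span {}" by (simp add: ideal_smult.zero)
  show "span {} \<subseteq> {\<zero>\<^bsub>M\<^esub>}"
  proof
    fix x assume "x \<in> span {}" then show "x \<in> {\<zero>\<^bsub>M\<^esub>}" by induction auto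
  qed
qed

lemma span_insert:
  assumes "g \<in> carrier M" "G \<subseteq> carrier M" "x \<in> span (insert g G)"
  shows "\<exists>v\<in>span G. \<exists>a\<in>carrier R. x = v \<oplus>\<^bsub>M\<^esub> a \<odot>\<^bsub>M\<^esub> g"
  using assms(3)
proof induction
  case zero
  have "\<zero>\<^bsub>M\<^esub> = \<zero>\<^bsub>M\<^esub> \<oplus>\<^bsub>M\<^esub> \<zero> \<odot>\<^bsub>M\<^esub> g" using assms(1) by simp
  then show ?case using ideal_smult.zero[of M R "carrier R" G] by blast
next
  case (gen b s)
  show ?case
  proof (cases "s = g")
    case True
    have "b \<odot>\<^bsub>M\<^esub> s = \<zero>\<^bsub>M\<^esub> \<oplus>\<^bsub>M\<^esub> b \<odot>\<^bsub>M\<^esub> g" using True gen assms(1) by simp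
    then show ?thesis using ideal_smult.zero[of M R "carrier R" G] gen by blast
  next
    case False
    then have s: "s \<in> G" using gen by simp
    then have "b \<odot>\<^bsub>M\<^esub> s = b \<odot>\<^bsub>M\<^esub> s \<oplus>\<^bsub>M\<^esub> \<zero> \<odot>\<^bsub>M\<^esub> g" using gen assms by auto
    moreover have "b \<odot>\<^bsub>M\<^esub> s \<in> span G" using s gen by (intro ideal_smult.gen) auto
    ultimately show ?thesis by blast
  qed
next
  case (add u w)
  from add obtain v1 a1 v2 a2 where h: "v1 \<in> span G" "a1 \<in> carrier R" "u = v1 \<oplus>\<^bsub>M\<^esub> a1 \<odot>\<^bsub>M\<^esub> g"
    "v2 \<in> span G" "a2 \<in> carrier R" "w = v2 \<oplus>\<^bsub>M\<^esub> a2 \<odot>\<^bsub>M\<^esub> g" by blast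
  have c: "v1 \<in> carrier M" "v2 \<in> carrier M" using h subm_carr[OF span_subm[OF assms(2)]] by auto
  have "u \<oplus>\<^bsub>M\<^esub> w = (v1 \<oplus>\<^bsub>M\<^esub> v2) \<oplus>\<^bsub>M\<^esub> (a1 \<oplus> a2) \<odot>\<^bsub>M\<^esub> g"
    using h c assms(1) by (simp add: smult_l_distr M.a_ac)
  moreover have "v1 \<oplus>\<^bsub>M\<^esub> v2 \<in> span G" using h by (intro ideal_smult.add)
  ultimately show ?case using h by blast
qed

lemma fg_aux:
  assumes noeth: "noetherian_ring R"
  shows "finite G \<Longrightarrow> G \<subseteq> carrier M \<Longrightarrow> subm U \<Longrightarrow> U \<subseteq> span G \<Longrightarrow>
    \<exists>S. finite S \<and> S \<subseteq> U \<and> U = span S"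
proof (induction G arbitrary: U rule: finite_induct)
  case empty
  then have "U = {\<zero>\<^bsub>M\<^esub>}" using span_empty subm_zero by auto
  then show ?case using span_empty by auto
next
  case (insert g G)
  have gc: "g \<in> carrier M" and Gc: "G \<subseteq> carrier M" using insert.prems(1) by auto
  have spG: "subm (span G)" using span_subm[OF Gc] .
  have Uc: "U \<subseteq> carrier M" using subm_carr[OF insert.prems(2)] .
  define A where "A = {a \<in> carrier R. \<exists>v\<in>span G. v \<oplus>\<^bsub>M\<^esub> a \<odot>\<^bsub>M\<^esub> g \<in> U}"
  have "ideal A R" unfolding A_def
  proof (rule ideal_by_closure)
    show "\<zero> \<in> {a \<in> carrier R. \<exists>v\<in>span G. v \<oplus>\<^bsub>M\<^esub> a \<odot>\<^bsub>M\<^esub> g \<in> U}"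
    proof -
      have "\<zero>\<^bsub>M\<^esub> \<oplus>\<^bsub>M\<^esub> \<zero> \<odot>\<^bsub>M\<^esub> g \<in> U" using subm_zero[OF insert.prems(2)] gc by simp
      then show ?thesis using subm_zero[OF spG] by blast
    qed
  next
    fix x y assume x: "x \<in> {a \<in> carrier R. \<exists>v\<in>span G. v \<oplus>\<^bsub>M\<^esub> a \<odot>\<^bsub>M\<^esub> g \<in> U}"
      and y: "y \<in> {a \<in> carrier R. \<exists>v\<in>span G. v \<oplus>\<^bsub>M\<^esub> a \<odot>\<^bsub>M\<^esub> g \<in> U}"
    then obtain v1 v2 where h: "x \<in> carrier R" "y \<in> carrier R" "v1 \<in> span G" "v2 \<in> span G"
      "v1 \<oplus>\<^bsub>M\<^esub> x \<odot>\<^bsub>M\<^esub> g \<in> U" "v2 \<oplus>\<^bsub>M\<^esub> y \<odot>\<^bsub>M\<^esub> g \<in> U" by blast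
    have c: "v1 \<in> carrier M" "v2 \<in> carrier M" using h subm_carr[OF spG] by auto
    have "(v1 \<oplus>\<^bsub>M\<^esub> x \<odot>\<^bsub>M\<^esub> g) \<oplus>\<^bsub>M\<^esub> (v2 \<oplus>\<^bsub>M\<^esub> y \<odot>\<^bsub>M\<^esub> g) = (v1 \<oplus>\<^bsub>M\<^esub> v2) \<oplus>\<^bsub>M\<^esub> (x \<oplus> y) \<odot>\<^bsub>M\<^esub> g"
      using h c gc by (simp add: smult_l_distr M.a_ac)
    moreover have "(v1 \<oplus>\<^bsub>M\<^esub> x \<odot>\<^bsub>M\<^esub> g) \<oplus>\<^bsub>M\<^esub> (v2 \<oplus>\<^bsub>M\<^esub> y \<odot>\<^bsub>M\<^esub> g) \<in> U"
      using h subm_add[OF insert.prems(2)] by blast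
    moreover have "v1 \<oplus>\<^bsub>M\<^esub> v2 \<in> span G" using h by (intro ideal_smult.add)
    ultimately show "x \<oplus> y \<in> {a \<in> carrier R. \<exists>v\<in>span G. v \<oplus>\<^bsub>M\<^esub> a \<odot>\<^bsub>M\<^esub> g \<in> U}"
      using h by auto
  next
    fix r x assume r: "r \<in> carrier R" and x: "x \<in> {a \<in> carrier R. \<exists>v\<in>span G. v \<oplus>\<^bsub>M\<^esub> a \<odot>\<^bsub>M\<^esub> g \<in> U}"
    then obtain v1 where h: "x \<in> carrier R" "v1 \<in> span G" "v1 \<oplus>\<^bsub>M\<^esub> x \<odot>\<^bsub>M\<^esub> g \<in> U" by blast
    have c: "v1 \<in> carrier M" using h subm_carr[OF spG] by auto
    have "r \<odot>\<^bsub>M\<^esub> (v1 \<oplus>\<^bsub>M\<^esub> x \<odot>\<^bsub>M\<^esub> g) = r \<odot>\<^bsub>M\<^esub> v1 \<oplus>\<^bsub>M\<^esub> (r \<otimes> x) \<odot>\<^bsub>M\<^esub> g"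
      using h c gc r by (simp add: smult_r_distr smult_assoc1)
    moreover have "r \<odot>\<^bsub>M\<^esub> (v1 \<oplus>\<^bsub>M\<^esub> x \<odot>\<^bsub>M\<^esub> g) \<in> U" using h r subm_smult[OF insert.prems(2)] by blast
    moreover have "r \<odot>\<^bsub>M\<^esub> v1 \<in> span G" using h r subm_smult[OF spG] by blast
    ultimately show "r \<otimes> x \<in> {a \<in> carrier R. \<exists>v\<in>span G. v \<oplus>\<^bsub>M\<^esub> a \<odot>\<^bsub>M\<^esub> g \<in> U}"
      using h r by auto
  qed auto
  then obtain C where C: "C \<subseteq> carrier R" "finite C" "A = Idl C"
    using noetherian_ring.finetely_gen[OF noeth] by blast
  have CA: "C \<subseteq> A" using C genideal_self[OF C(1)] by simp
  then have "\<forall>c\<in>C. \<exists>v\<in>span G. v \<oplus>\<^bsub>M\<^esub> c \<odot>\<^bsub>M\<^esub> g \<in> U" unfolding A_def by blast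
  then obtain vf where vf: "\<And>c. c \<in> C \<Longrightarrow> vf c \<in> span G \<and> vf c \<oplus>\<^bsub>M\<^esub> c \<odot>\<^bsub>M\<^esub> g \<in> U"
    using bchoice[of C "\<lambda>c v. v \<in> span G \<and> v \<oplus>\<^bsub>M\<^esub> c \<odot>\<^bsub>M\<^esub> g \<in> U"] by blast
  define u where "u c = vf c \<oplus>\<^bsub>M\<^esub> c \<odot>\<^bsub>M\<^esub> g" for c
  have uU: "u ` C \<subseteq> U" using vf unfolding u_def by auto
  have U'sub: "subm (U \<inter> span G)"
  proof (rule submI)
    show "U \<inter> span G \<subseteq> carrier M" using Uc by auto
    show "\<zero>\<^bsub>M\<^esub> \<in> U \<inter> span G" using subm_zero[OF insert.prems(2)] subm_zero[OF spG] by auto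
    show "\<And>x y. x \<in> U \<inter> span G \<Longrightarrow> y \<in> U \<inter> span G \<Longrightarrow> x \<oplus>\<^bsub>M\<^esub> y \<in> U \<inter> span G"
      using subm_add[OF insert.prems(2)] subm_add[OF spG] by blast
    show "\<And>a x. a \<in> carrier R \<Longrightarrow> x \<in> U \<inter> span G \<Longrightarrow> a \<odot>\<^bsub>M\<^esub> x \<in> U \<inter> span G"
      using subm_smult[OF insert.prems(2)] subm_smult[OF spG] by blast
  qed
  obtain D where D: "finite D" "D \<subseteq> U \<inter> span G" "U \<inter> span G = span D"
    using insert.IH[OF Gc U'sub] by blast
  let ?S = "D \<union> u ` C"
  have Sc: "?S \<subseteq> carrier M" using D uU Uc by auto
  have "U \<subseteq> span ?S"
  proof
    fix x assume xU: "x \<in> U"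
    then obtain v a where va: "v \<in> span G" "a \<in> carrier R" "x = v \<oplus>\<^bsub>M\<^esub> a \<odot>\<^bsub>M\<^esub> g"
      using span_insert[OF gc Gc] insert.prems(3) by blast
    then have "a \<in> Idl C" using C(3) xU unfolding A_def by blast
    define A' where "A' = {a \<in> carrier R. \<exists>w\<in>span (u ` C). \<exists>v'\<in>span G. w = v' \<oplus>\<^bsub>M\<^esub> a \<odot>\<^bsub>M\<^esub> g}"
    have uCc: "u ` C \<subseteq> carrier M" using uU Uc by auto
    have spuC: "subm (span (u ` C))" using span_subm[OF uCc] .
    have "ideal A' R" unfolding A'_def
    proof (rule ideal_by_closure)
      show "\<zero> \<in> {a \<in> carrier R. \<exists>w\<in>span (u ` C). \<exists>v'\<in>span G. w = v' \<oplus>\<^bsub>M\<^esub> a \<odot>\<^bsub>M\<^esub> g}"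
        using subm_zero[OF spuC] subm_zero[OF spG] gc by force
    next
      fix x y assume "x \<in> {a \<in> carrier R. \<exists>w\<in>span (u ` C). \<exists>v'\<in>span G. w = v' \<oplus>\<^bsub>M\<^esub> a \<odot>\<^bsub>M\<^esub> g}"
        "y \<in> {a \<in> carrier R. \<exists>w\<in>span (u ` C). \<exists>v'\<in>span G. w = v' \<oplus>\<^bsub>M\<^esub> a \<odot>\<^bsub>M\<^esub> g}"
      then obtain w1 w2 v1 v2 where h: "x \<in> carrier R" "y \<in> carrier R" "v1 \<in> span G" "v2 \<in> span G"
        "w1 \<in> span (u ` C)" "w2 \<in> span (u ` C)"
        "w1 = v1 \<oplus>\<^bsub>M\<^esub> x \<odot>\<^bsub>M\<^esub> g" "w2 = v2 \<oplus>\<^bsub>M\<^esub> y \<odot>\<^bsub>M\<^esub> g" by blast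
      have c: "v1 \<in> carrier M" "v2 \<in> carrier M" using h subm_carr[OF spG] by auto
      have "w1 \<oplus>\<^bsub>M\<^esub> w2 = (v1 \<oplus>\<^bsub>M\<^esub> v2) \<oplus>\<^bsub>M\<^esub> (x \<oplus> y) \<odot>\<^bsub>M\<^esub> g"
        using h c gc by (simp add: smult_l_distr M.a_ac)
      moreover have "w1 \<oplus>\<^bsub>M\<^esub> w2 \<in> span (u ` C)" using h by (intro ideal_smult.add)
      moreover have "v1 \<oplus>\<^bsub>M\<^esub> v2 \<in> span G" using h by (intro ideal_smult.add)
      ultimately show "x \<oplus> y \<in> {a \<in> carrier R. \<exists>w\<in>span (u ` C). \<exists>v'\<in>span G. w = v' \<oplus>\<^bsub>M\<^esub> a \<odot>\<^bsub>M\<^esub> g}"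
        using h by auto
    next
      fix r x assume r: "r \<in> carrier R" and "x \<in> {a \<in> carrier R. \<exists>w\<in>span (u ` C). \<exists>v'\<in>span G. w = v' \<oplus>\<^bsub>M\<^esub> a \<odot>\<^bsub>M\<^esub> g}"
      then obtain w1 v1 where h: "x \<in> carrier R" "v1 \<in> span G" "w1 \<in> span (u ` C)" "w1 = v1 \<oplus>\<^bsub>M\<^esub> x \<odot>\<^bsub>M\<^esub> g" by blast
      have c: "v1 \<in> carrier M" using h subm_carr[OF spG] by auto
      have "r \<odot>\<^bsub>M\<^esub> w1 = r \<odot>\<^bsub>M\<^esub> v1 \<oplus>\<^bsub>M\<^esub> (r \<otimes> x) \<odot>\<^bsub>M\<^esub> g"
        using h c gc r by (simp add: smult_r_distr smult_assoc1)
      moreover have "r \<odot>\<^bsub>M\<^esub> w1 \<in> span (u ` C)" using h r subm_smult[OF spuC] by blast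
      moreover have "r \<odot>\<^bsub>M\<^esub> v1 \<in> span G" using h r subm_smult[OF spG] by blast
      ultimately show "r \<otimes> x \<in> {a \<in> carrier R. \<exists>w\<in>span (u ` C). \<exists>v'\<in>span G. w = v' \<oplus>\<^bsub>M\<^esub> a \<odot>\<^bsub>M\<^esub> g}"
        using h r by auto
    qed auto
    moreover have "C \<subseteq> A'"
    proof
      fix c assume c: "c \<in> C"
      have "u c \<in> span (u ` C)" using c uCc by (intro span_base) auto
      then show "c \<in> A'" unfolding A'_def u_def using c C(1) vf by blast
    qed
    ultimately have "Idl C \<subseteq> A'" by (rule genideal_minimal)
    with \<open>a \<in> Idl C\<close> obtain w v' where wv: "w \<in> span (u ` C)" "v' \<in> span G" "w = v' \<oplus>\<^bsub>M\<^esub> a \<odot>\<^bsub>M\<^esub> g"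
      unfolding A'_def by blast
    have wU: "w \<in> U" using wv span_in[OF insert.prems(2) uU] by blast
    have c: "v \<in> carrier M" "v' \<in> carrier M" "a \<odot>\<^bsub>M\<^esub> g \<in> carrier M" "w \<in> carrier M"
      using va wv subm_carr[OF spG] gc Uc wU by auto
    have "x \<ominus>\<^bsub>M\<^esub> w = v \<ominus>\<^bsub>M\<^esub> v'" using va wv c by (simp add: M.cancel_common)
    moreover have "v \<ominus>\<^bsub>M\<^esub> v' \<in> span G" using va wv subm_diff[OF spG] by blast
    moreover have "x \<ominus>\<^bsub>M\<^esub> w \<in> U" using xU wU subm_diff[OF insert.prems(2)] by blast
    ultimately have "x \<ominus>\<^bsub>M\<^esub> w \<in> span D" using D(3) by auto
    then have "x \<ominus>\<^bsub>M\<^esub> w \<in> span ?S" using span_mono[of D ?S] by blast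
    moreover have "w \<in> span ?S" using wv span_mono[of "u ` C" ?S] by blast
    ultimately have "w \<oplus>\<^bsub>M\<^esub> (x \<ominus>\<^bsub>M\<^esub> w) \<in> span ?S" by (intro ideal_smult.add)
    moreover have "w \<oplus>\<^bsub>M\<^esub> (x \<ominus>\<^bsub>M\<^esub> w) = x"
    proof -
      have xc: "x \<in> carrier M" using xU Uc by blast
      have "w \<oplus>\<^bsub>M\<^esub> (x \<ominus>\<^bsub>M\<^esub> w) = x \<oplus>\<^bsub>M\<^esub> (w \<ominus>\<^bsub>M\<^esub> w)"
        using xc c by (simp add: a_minus_def M.a_lcomm)
      also have "\<dots> = x" using xc c by (simp add: a_minus_def M.r_neg)
      finally show ?thesis .
    qed
    ultimately show "x \<in> span ?S" by simp
  qed
  moreover have "span ?S \<subseteq> U" by (rule span_in[OF insert.prems(2)]) (use D uU in blast)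
  ultimately show ?case using D uU C by (intro exI[of _ ?S]) auto
qed

definition acc :: bool where
  "acc \<longleftrightarrow> (\<forall>U :: nat \<Rightarrow> 'c set. (\<forall>j. subm (U j)) \<longrightarrow> (\<forall>j. U j \<subseteq> U (Suc j)) \<longrightarrow>
     (\<exists>c. \<forall>j\<ge>c. U j = U c))"

lemma acc_of_fg:
  assumes noeth: "noetherian_ring R" and G: "finite G" "G \<subseteq> carrier M" "carrier M \<subseteq> span G"
  shows acc
  unfolding acc_def
proof (intro allI impI)
  fix U :: "nat \<Rightarrow> 'c set" assume sU: "\<forall>j. subm (U j)" and mU: "\<forall>j. U j \<subseteq> U (Suc j)"
  have mono: "i \<le> j \<Longrightarrow> U i \<subseteq> U j" for i j
  proof (induction j rule: dec_induct)
    case base then show ?case by simp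
  next
    case (step k) then show ?case using mU by blast
  qed
  let ?V = "\<Union>j. U j"
  have sV: "subm ?V"
  proof (rule submI)
    show "?V \<subseteq> carrier M" using subm_carr sU by (simp add: UN_least)
    show "\<zero>\<^bsub>M\<^esub> \<in> ?V" using subm_zero[OF spec[OF sU, of 0]] by blast
  next
    fix x y assume "x \<in> ?V" "y \<in> ?V"
    then obtain i j where "x \<in> U i" "y \<in> U j" by blast
    then have "x \<in> U (max i j)" "y \<in> U (max i j)" using mono[of i "max i j"] mono[of j "max i j"] by auto
    then show "x \<oplus>\<^bsub>M\<^esub> y \<in> ?V" using subm_add[OF spec[OF sU, of "max i j"]] by blast
  next
    fix a x assume a: "a \<in> carrier R" and "x \<in> ?V"
    then obtain i where "x \<in> U i" by blast
    then show "a \<odot>\<^bsub>M\<^esub> x \<in> ?V" using subm_smult[OF spec[OF sU, of i] a] by blast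
  qed
  obtain S where S: "finite S" "S \<subseteq> ?V" "?V = span S"
    using fg_aux[OF noeth G(1) G(2) sV] G(3) subm_carr[OF sV] by blast
  have "\<forall>s\<in>S. \<exists>j. s \<in> U j" using S by blast
  then obtain jf where jf: "\<And>s. s \<in> S \<Longrightarrow> s \<in> U (jf s)" using bchoice[of S "\<lambda>s j. s \<in> U j"] by blast
  define c where "c = Max (insert 0 (jf ` S))"
  have "S \<subseteq> U c"
  proof
    fix s assume "s \<in> S"
    then have "jf s \<le> c" unfolding c_def using S(1) by (intro Max_ge) auto
    then show "s \<in> U c" using jf[OF \<open>s \<in> S\<close>] mono by blast
  qed
  then have "?V \<subseteq> U c" using S(3) span_in[OF spec[OF sU, of c]] by auto
  then show "\<exists>c. \<forall>j\<ge>c. U j = U c" using mono by blast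
qed

lemma span_of_fin_gen:
  assumes "fin_gen_module R M"
  shows "\<exists>G. finite G \<and> G \<subseteq> carrier M \<and> carrier M \<subseteq> span G"
proof -
  obtain S where S: "finite S" "S \<subseteq> carrier M"
    "carrier M = {finsum M (\<lambda>s. f s \<odot>\<^bsub>M\<^esub> s) S | f. f \<in> S \<rightarrow> carrier R}"
    using assms unfolding fin_gen_module_def by blast
  have fs: "finsum M (\<lambda>s. f s \<odot>\<^bsub>M\<^esub> s) T \<in> span S" if f: "f \<in> S \<rightarrow> carrier R" and TS: "T \<subseteq> S" for f T
  proof -
    have "finite T" using TS S(1) finite_subset by blast
    then show ?thesis using TS
    proof (induction T rule: finite_induct)
      case empty
      have "finsum M (\<lambda>s. f s \<odot>\<^bsub>M\<^esub> s) {} = \<zero>\<^bsub>M\<^esub>" by (rule M.finsum_empty)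
      then show ?case using ideal_smult.zero[of M R "carrier R" S] by simp
    next
      case (insert t T)
      have tS: "t \<in> S" using insert.prems by blast
      have tc: "t \<in> carrier M" using tS S(2) by blast
      have ftc: "f t \<in> carrier R" using tS f by blast
      have fT: "(\<lambda>s. f s \<odot>\<^bsub>M\<^esub> s) \<in> T \<rightarrow> carrier M"
      proof
        fix s assume "s \<in> T"
        then have "s \<in> S" using insert.prems by blast
        then show "f s \<odot>\<^bsub>M\<^esub> s \<in> carrier M" using f S(2) by (intro smult_closed) auto
      qed
      have ftt: "f t \<odot>\<^bsub>M\<^esub> t \<in> carrier M" using ftc tc by (rule smult_closed)
      have eq: "finsum M (\<lambda>s. f s \<odot>\<^bsub>M\<^esub> s) (insert t T) = f t \<odot>\<^bsub>M\<^esub> t \<oplus>\<^bsub>M\<^esub> finsum M (\<lambda>s. f s \<odot>\<^bsub>M\<^esub> s) T"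
        by (rule M.finsum_insert[OF insert(1) insert(2) fT ftt])
      have g1: "f t \<odot>\<^bsub>M\<^esub> t \<in> span S" using ftc tS by (rule ideal_smult.gen)
      have g2: "finsum M (\<lambda>s. f s \<odot>\<^bsub>M\<^esub> s) T \<in> span S" using insert.IH insert.prems by blast
      show ?case unfolding eq by (rule ideal_smult.add[OF g1 g2])
    qed
  qed
  have "carrier M \<subseteq> span S"
  proof
    fix x assume "x \<in> carrier M"
    then obtain f where "f \<in> S \<rightarrow> carrier R" "x = finsum M (\<lambda>s. f s \<odot>\<^bsub>M\<^esub> s) S"
      using S(3) by blast
    then show "x \<in> span S" using fs[of f S] by simp
  qed
  then show ?thesis using S(1,2) by blast
qed

end



lemma (in abelian_group) eq_minus_left:
  assumes "x \<in> carrier G" "w \<in> carrier G" "z = x \<oplus> w" shows "w = z \<ominus> x"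
proof -
  have "z \<ominus> x = w \<oplus> (x \<oplus> \<ominus> x)" using assms by (simp add: a_minus_def a_ac)
  also have "\<dots> = w" using assms by (simp add: r_neg)
  finally show ?thesis by simp
qed

context module
begin

lemma subm_zero_set: "subm {\<zero>\<^bsub>M\<^esub>}"
  by (rule submI) auto

lemma aqF_subm:
  assumes "b \<in> carrier R" shows "subm ((\<lambda>y. b \<odot>\<^bsub>M\<^esub> y) ` carrier M)"
proof (rule submI)
  show "(\<lambda>y. b \<odot>\<^bsub>M\<^esub> y) ` carrier M \<subseteq> carrier M" using assms by auto
  have "b \<odot>\<^bsub>M\<^esub> \<zero>\<^bsub>M\<^esub> = \<zero>\<^bsub>M\<^esub>" using assms by simp
  then show "\<zero>\<^bsub>M\<^esub> \<in> (\<lambda>y. b \<odot>\<^bsub>M\<^esub> y) ` carrier M" by (metis M.zero_closed image_eqI)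
next
  fix x y assume "x \<in> (\<lambda>y. b \<odot>\<^bsub>M\<^esub> y) ` carrier M" "y \<in> (\<lambda>y. b \<odot>\<^bsub>M\<^esub> y) ` carrier M"
  then obtain x' y' where h: "x' \<in> carrier M" "y' \<in> carrier M" "x = b \<odot>\<^bsub>M\<^esub> x'" "y = b \<odot>\<^bsub>M\<^esub> y'" by blast
  then have "x \<oplus>\<^bsub>M\<^esub> y = b \<odot>\<^bsub>M\<^esub> (x' \<oplus>\<^bsub>M\<^esub> y')" using assms by (simp add: smult_r_distr)
  moreover have "x' \<oplus>\<^bsub>M\<^esub> y' \<in> carrier M" using h by simp
  ultimately show "x \<oplus>\<^bsub>M\<^esub> y \<in> (\<lambda>y. b \<odot>\<^bsub>M\<^esub> y) ` carrier M" by blast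
next
  fix r x assume r: "r \<in> carrier R" and "x \<in> (\<lambda>y. b \<odot>\<^bsub>M\<^esub> y) ` carrier M"
  then obtain x' where h: "x' \<in> carrier M" "x = b \<odot>\<^bsub>M\<^esub> x'" by blast
  then have "r \<odot>\<^bsub>M\<^esub> x = b \<odot>\<^bsub>M\<^esub> (r \<odot>\<^bsub>M\<^esub> x')"
    using assms r by (simp add: smult_assoc1[symmetric] R.m_comm)
  moreover have "r \<odot>\<^bsub>M\<^esub> x' \<in> carrier M" using h r by simp
  ultimately show "r \<odot>\<^bsub>M\<^esub> x \<in> (\<lambda>y. b \<odot>\<^bsub>M\<^esub> y) ` carrier M" by blast
qed

lemma principal_AR:
  assumes acc: acc and a: "a \<in> carrier R" and A: "subm A" and B: "subm B"
  shows "\<exists>c::nat. \<forall>q::nat\<ge>c. \<forall>y\<in>carrier M. a [^] q \<odot>\<^bsub>M\<^esub> y \<in> submod_sum M A B \<longrightarrow>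
      a [^] q \<odot>\<^bsub>M\<^esub> y \<in> submod_sum M ((\<lambda>x. a [^] (q - c) \<odot>\<^bsub>M\<^esub> x) ` A) B"
proof -
  have AB: "subm (submod_sum M A B)" using A B by (rule submod_sum_subm)
  define T where "T j = {y \<in> carrier M. a [^] (j::nat) \<odot>\<^bsub>M\<^esub> y \<in> submod_sum M A B}" for j
  have sT: "subm (T j)" for j
  proof (rule submI)
    have aj: "a [^] j \<in> carrier R" using a by (rule R.nat_pow_closed)
    show "T j \<subseteq> carrier M" unfolding T_def by blast
    show "\<zero>\<^bsub>M\<^esub> \<in> T j" unfolding T_def using aj subm_zero[OF AB] by simp
    fix x y assume "x \<in> T j" "y \<in> T j"
    then show "x \<oplus>\<^bsub>M\<^esub> y \<in> T j" unfolding T_def using aj subm_add[OF AB] by (simp add: smult_r_distr)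
  next
    have aj: "a [^] j \<in> carrier R" using a by (rule R.nat_pow_closed)
    fix r x assume r: "r \<in> carrier R" and x: "x \<in> T j"
    then have "a [^] j \<odot>\<^bsub>M\<^esub> (r \<odot>\<^bsub>M\<^esub> x) = r \<odot>\<^bsub>M\<^esub> (a [^] j \<odot>\<^bsub>M\<^esub> x)"
      using aj unfolding T_def by (simp add: smult_assoc1[symmetric] R.m_comm)
    then show "r \<odot>\<^bsub>M\<^esub> x \<in> T j" using x r subm_smult[OF AB] unfolding T_def by simp
  qed
  have mT: "T j \<subseteq> T (Suc j)" for j
  proof
    fix y assume y: "y \<in> T j"
    have "a [^] Suc j \<odot>\<^bsub>M\<^esub> y = a \<odot>\<^bsub>M\<^esub> (a [^] j \<odot>\<^bsub>M\<^esub> y)"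
      using y a unfolding T_def by (simp add: smult_assoc1[symmetric] R.m_comm[of _ a])
    then show "y \<in> T (Suc j)" using y a subm_smult[OF AB] unfolding T_def by simp
  qed
  obtain c where c: "\<And>j. j \<ge> c \<Longrightarrow> T j = T c"
    using acc sT mT unfolding acc_def by blast
  show ?thesis
  proof (intro exI allI impI ballI)
    fix q y assume q: "c \<le> q" and y: "y \<in> carrier M" and h: "a [^] q \<odot>\<^bsub>M\<^esub> y \<in> submod_sum M A B"
    then have "y \<in> T c" using c[OF q] unfolding T_def by auto
    then obtain al be where ab: "al \<in> A" "be \<in> B" "a [^] c \<odot>\<^bsub>M\<^esub> y = al \<oplus>\<^bsub>M\<^esub> be"
      unfolding T_def by (auto elim: submod_sumE)
    have abc: "al \<in> carrier M" "be \<in> carrier M" using ab subm_carr[OF A] subm_carr[OF B] by auto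
    have "a [^] q = a [^] (q - c) \<otimes> a [^] c" using q a by (simp add: R.nat_pow_mult)
    then have "a [^] q \<odot>\<^bsub>M\<^esub> y = a [^] (q - c) \<odot>\<^bsub>M\<^esub> (a [^] c \<odot>\<^bsub>M\<^esub> y)"
      using a y by (simp add: smult_assoc1)
    also have "\<dots> = a [^] (q - c) \<odot>\<^bsub>M\<^esub> al \<oplus>\<^bsub>M\<^esub> a [^] (q - c) \<odot>\<^bsub>M\<^esub> be"
      using ab abc a by (simp add: smult_r_distr)
    finally show "a [^] q \<odot>\<^bsub>M\<^esub> y \<in> submod_sum M ((\<lambda>x. a [^] (q - c) \<odot>\<^bsub>M\<^esub> x) ` A) B"
      using ab subm_smult[OF B, of "a [^] (q - c)" be] a by (auto intro: submod_sumI)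
  qed
qed

end



context module
begin

lemma pow_split:
  assumes I: "ideal I R" and J: "ideal J R" and a: "a \<in> carrier R"
    and dec: "\<And>i. i \<in> I \<Longrightarrow> \<exists>j\<in>J. \<exists>r\<in>carrier R. i = j \<oplus> r \<otimes> a"
  shows "ideal_smult R M (ideal_pow R I (p + q)) (carrier M) \<subseteq>
     submod_sum M (ideal_smult R M (ideal_pow R J p) (carrier M)) ((\<lambda>y. a [^] q \<odot>\<^bsub>M\<^esub> y) ` carrier M)"
proof (induction "p + q" arbitrary: p q)
  case 0
  then have "p = 0" "q = 0" by auto
  then show ?case using submod_sum_left[OF aqF_subm[OF R.one_closed]] ideal_smult_carr[OF ideal_sub_carrier[OF oneideal], of "carrier M"]
    by (simp add: ideal_smult_carrierR[OF subm_carrier])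
next
  case (Suc n)
  have Jp: "subm (ideal_smult R M (ideal_pow R J p) (carrier M))"
    using ideal_pow_ideal[OF J] by (intro ideal_smult_subm) auto
  have aq: "subm ((\<lambda>y. a [^] q \<odot>\<^bsub>M\<^esub> y) ` carrier M)" using a by (intro aqF_subm) simp
  have Z: "subm (submod_sum M (ideal_smult R M (ideal_pow R J p) (carrier M)) ((\<lambda>y. a [^] q \<odot>\<^bsub>M\<^esub> y) ` carrier M))"
    using Jp aq by (rule submod_sum_subm)
  have Ipc: "ideal_smult R M (ideal_pow R I (p + q)) (carrier M) \<subseteq> carrier M"
    using ideal_pow_ideal[OF I] ideal_sub_carrier by (intro ideal_smult_carr) auto
  show ?case
  proof (cases "q = 0")
    case True
    have "(\<lambda>y. a [^] q \<odot>\<^bsub>M\<^esub> y) ` carrier M = carrier M" using True by force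
    then show ?thesis using Ipc submod_sum_right[OF Jp, of "carrier M"] by auto
  next
    case qn0: False
    show ?thesis
    proof (cases "p = 0")
      case True
      have "ideal_smult R M (ideal_pow R J p) (carrier M) = carrier M"
        using True by (simp add: ideal_smult_carrierR[OF subm_carrier])
      then show ?thesis using Ipc submod_sum_left[OF aq, of "carrier M"] by auto
    next
      case pn0: False
      obtain p' q' where pq: "p = Suc p'" "q = Suc q'" using pn0 qn0 by (metis not0_implies_Suc)
      have n: "n = p' + q" "n = p + q'" using Suc pq by auto
      have IH1: "ideal_smult R M (ideal_pow R I n) (carrier M) \<subseteq>
        submod_sum M (ideal_smult R M (ideal_pow R J p') (carrier M)) ((\<lambda>y. a [^] q \<odot>\<^bsub>M\<^esub> y) ` carrier M)"
        using Suc(1)[OF n(1)] n(1) by simp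
      have IH2: "ideal_smult R M (ideal_pow R I n) (carrier M) \<subseteq>
        submod_sum M (ideal_smult R M (ideal_pow R J p) (carrier M)) ((\<lambda>y. a [^] q' \<odot>\<^bsub>M\<^esub> y) ` carrier M)"
        using Suc(1)[OF n(2)] n(2) by simp
      have In: "ideal (ideal_pow R I n) R" using ideal_pow_ideal[OF I] .
      have Jp': "ideal (ideal_pow R J p') R" using ideal_pow_ideal[OF J] .
      have "ideal_smult R M (ideal_pow R I (p + q)) (carrier M) =
         ideal_smult R M (ideal_prod R I (ideal_pow R I n)) (carrier M)" unfolding Suc(2)[symmetric] by simp
      also have "\<dots> \<subseteq> ideal_smult R M I (ideal_smult R M (ideal_pow R I n) (carrier M))"
        using I In by (intro ideal_smult_prod_sub) auto
      also have "\<dots> \<subseteq> submod_sum M (ideal_smult R M (ideal_pow R J p) (carrier M)) ((\<lambda>y. a [^] q \<odot>\<^bsub>M\<^esub> y) ` carrier M)"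
      proof (rule ideal_smult_least[OF Z])
        fix i y assume i: "i \<in> I" and y: "y \<in> ideal_smult R M (ideal_pow R I n) (carrier M)"
        obtain j r where jr: "j \<in> J" "r \<in> carrier R" "i = j \<oplus> r \<otimes> a" using dec[OF i] by blast
        have jc: "j \<in> carrier R" using jr ideal_sub_carrier[OF J] by blast
        have yc: "y \<in> carrier M" using y ideal_smult_carr[OF ideal_sub_carrier[OF In]] by blast
        obtain y1 w1 where yw1: "y1 \<in> ideal_smult R M (ideal_pow R J p') (carrier M)" "w1 \<in> carrier M"
          "y = y1 \<oplus>\<^bsub>M\<^esub> a [^] q \<odot>\<^bsub>M\<^esub> w1"
        proof -
          have "y \<in> submod_sum M (ideal_smult R M (ideal_pow R J p') (carrier M)) ((\<lambda>y. a [^] q \<odot>\<^bsub>M\<^esub> y) ` carrier M)"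
            using IH1 y by blast
          then obtain y1 t where "y1 \<in> ideal_smult R M (ideal_pow R J p') (carrier M)"
            "t \<in> (\<lambda>y. a [^] q \<odot>\<^bsub>M\<^esub> y) ` carrier M" "y = y1 \<oplus>\<^bsub>M\<^esub> t" by (rule submod_sumE)
          then show ?thesis using that by blast
        qed
        obtain y2 w2 where yw2: "y2 \<in> ideal_smult R M (ideal_pow R J p) (carrier M)" "w2 \<in> carrier M"
          "y = y2 \<oplus>\<^bsub>M\<^esub> a [^] q' \<odot>\<^bsub>M\<^esub> w2"
        proof -
          have "y \<in> submod_sum M (ideal_smult R M (ideal_pow R J p) (carrier M)) ((\<lambda>y. a [^] q' \<odot>\<^bsub>M\<^esub> y) ` carrier M)"
            using IH2 y by blast
          then obtain y1 t where "y1 \<in> ideal_smult R M (ideal_pow R J p) (carrier M)"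
            "t \<in> (\<lambda>y. a [^] q' \<odot>\<^bsub>M\<^esub> y) ` carrier M" "y = y1 \<oplus>\<^bsub>M\<^esub> t" by (rule submod_sumE)
          then show ?thesis using that by blast
        qed
        have y1c: "y1 \<in> carrier M" using yw1(1) ideal_smult_carr[OF ideal_sub_carrier[OF Jp']] by blast
        have y2c: "y2 \<in> carrier M" using yw2(1) Jp subm_carr by blast
        have aqc: "a [^] q \<in> carrier R" "a [^] q' \<in> carrier R" using a by (simp_all add: R.nat_pow_closed)
        have "j \<odot>\<^bsub>M\<^esub> y1 \<in> ideal_smult R M J (ideal_smult R M (ideal_pow R J p') (carrier M))"
          using jr(1) yw1(1) by (rule ideal_smult.gen)
        then have e1: "j \<odot>\<^bsub>M\<^esub> y1 \<in> ideal_smult R M (ideal_pow R J p) (carrier M)"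
          using ideal_smult_prod_sup[OF J Jp', of "carrier M"] pq(1) by auto
        have "j \<odot>\<^bsub>M\<^esub> (a [^] q \<odot>\<^bsub>M\<^esub> w1) = a [^] q \<odot>\<^bsub>M\<^esub> (j \<odot>\<^bsub>M\<^esub> w1)"
          using jc aqc yw1(2) by (simp add: smult_assoc1[symmetric] R.m_comm[of j])
        then have e2: "j \<odot>\<^bsub>M\<^esub> (a [^] q \<odot>\<^bsub>M\<^esub> w1) \<in> (\<lambda>y. a [^] q \<odot>\<^bsub>M\<^esub> y) ` carrier M"
          using jc yw1(2) by auto
        have "j \<odot>\<^bsub>M\<^esub> y = j \<odot>\<^bsub>M\<^esub> y1 \<oplus>\<^bsub>M\<^esub> j \<odot>\<^bsub>M\<^esub> (a [^] q \<odot>\<^bsub>M\<^esub> w1)"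
          using yw1 jc y1c aqc by (simp add: smult_r_distr)
        then have p1: "j \<odot>\<^bsub>M\<^esub> y \<in> submod_sum M (ideal_smult R M (ideal_pow R J p) (carrier M)) ((\<lambda>y. a [^] q \<odot>\<^bsub>M\<^esub> y) ` carrier M)"
          using e1 e2 by (simp add: submod_sumI)
        have ra: "r \<otimes> a \<in> carrier R" using jr a by simp
        have e3: "(r \<otimes> a) \<odot>\<^bsub>M\<^esub> y2 \<in> ideal_smult R M (ideal_pow R J p) (carrier M)"
          using subm_smult[OF Jp ra yw2(1)] .
        have "(r \<otimes> a) \<otimes> a [^] q' = a [^] q \<otimes> r" using jr a pq(2)
          by (simp add: R.m_ac R.nat_pow_Suc2)
        then have "(r \<otimes> a) \<odot>\<^bsub>M\<^esub> (a [^] q' \<odot>\<^bsub>M\<^esub> w2) = a [^] q \<odot>\<^bsub>M\<^esub> (r \<odot>\<^bsub>M\<^esub> w2)"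
          using ra aqc jr yw2(2) by (simp add: smult_assoc1[symmetric])
        then have e4: "(r \<otimes> a) \<odot>\<^bsub>M\<^esub> (a [^] q' \<odot>\<^bsub>M\<^esub> w2) \<in> (\<lambda>y. a [^] q \<odot>\<^bsub>M\<^esub> y) ` carrier M"
          using jr yw2(2) by auto
        have "(r \<otimes> a) \<odot>\<^bsub>M\<^esub> y = (r \<otimes> a) \<odot>\<^bsub>M\<^esub> y2 \<oplus>\<^bsub>M\<^esub> (r \<otimes> a) \<odot>\<^bsub>M\<^esub> (a [^] q' \<odot>\<^bsub>M\<^esub> w2)"
          using yw2 ra y2c aqc by (simp add: smult_r_distr)
        then have p2: "(r \<otimes> a) \<odot>\<^bsub>M\<^esub> y \<in> submod_sum M (ideal_smult R M (ideal_pow R J p) (carrier M)) ((\<lambda>y. a [^] q \<odot>\<^bsub>M\<^esub> y) ` carrier M)"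
          using e3 e4 by (simp add: submod_sumI)
        have "i \<odot>\<^bsub>M\<^esub> y = j \<odot>\<^bsub>M\<^esub> y \<oplus>\<^bsub>M\<^esub> (r \<otimes> a) \<odot>\<^bsub>M\<^esub> y"
          using jr jc ra yc by (simp add: smult_l_distr)
        then show "i \<odot>\<^bsub>M\<^esub> y \<in> submod_sum M (ideal_smult R M (ideal_pow R J p) (carrier M)) ((\<lambda>y. a [^] q \<odot>\<^bsub>M\<^esub> y) ` carrier M)"
          using subm_add[OF Z p1 p2] by simp
      qed
      finally show ?thesis .
    qed
  qed
qed


lemma Idl_insert_dec:
  assumes S: "S \<subseteq> carrier R" and a: "a \<in> carrier R" and i: "i \<in> Idl (insert a S)"
  shows "\<exists>j\<in>Idl S. \<exists>r\<in>carrier R. i = j \<oplus> r \<otimes> a"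
proof -
  have J: "ideal (Idl S) R" using S by (rule genideal_ideal)
  have Jc: "Idl S \<subseteq> carrier R" using ideal_sub_carrier[OF J] .
  define D where "D = {x \<in> carrier R. \<exists>j\<in>Idl S. \<exists>r\<in>carrier R. x = j \<oplus> r \<otimes> a}"
  have "ideal D R" unfolding D_def
  proof (rule ideal_by_closure)
    show "\<zero> \<in> {x \<in> carrier R. \<exists>j\<in>Idl S. \<exists>r\<in>carrier R. x = j \<oplus> r \<otimes> a}"
    proof -
      have "\<zero> = \<zero> \<oplus> \<zero> \<otimes> a" using a by simp
      then show ?thesis using additive_subgroup.zero_closed[OF ideal.axioms(1)[OF J]] by blast
    qed
  next
    fix x y assume "x \<in> {x \<in> carrier R. \<exists>j\<in>Idl S. \<exists>r\<in>carrier R. x = j \<oplus> r \<otimes> a}"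
      "y \<in> {x \<in> carrier R. \<exists>j\<in>Idl S. \<exists>r\<in>carrier R. x = j \<oplus> r \<otimes> a}"
    then obtain j1 r1 j2 r2 where h: "x \<in> carrier R" "y \<in> carrier R" "j1 \<in> Idl S" "j2 \<in> Idl S"
      "r1 \<in> carrier R" "r2 \<in> carrier R" "x = j1 \<oplus> r1 \<otimes> a" "y = j2 \<oplus> r2 \<otimes> a" by blast
    have c: "j1 \<in> carrier R" "j2 \<in> carrier R" using h Jc by auto
    have "x \<oplus> y = (j1 \<oplus> j2) \<oplus> (r1 \<oplus> r2) \<otimes> a" using h c a by (simp add: R.l_distr R.a_ac)
    moreover have "j1 \<oplus> j2 \<in> Idl S" using h additive_subgroup.a_closed[OF ideal.axioms(1)[OF J]] by blast
    ultimately show "x \<oplus> y \<in> {x \<in> carrier R. \<exists>j\<in>Idl S. \<exists>r\<in>carrier R. x = j \<oplus> r \<otimes> a}"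
      using h R.a_closed[OF h(1) h(2)] R.a_closed[OF h(5) h(6)] by auto
  next
    fix s x assume s: "s \<in> carrier R" and "x \<in> {x \<in> carrier R. \<exists>j\<in>Idl S. \<exists>r\<in>carrier R. x = j \<oplus> r \<otimes> a}"
    then obtain j1 r1 where h: "x \<in> carrier R" "j1 \<in> Idl S" "r1 \<in> carrier R" "x = j1 \<oplus> r1 \<otimes> a" by blast
    have c: "j1 \<in> carrier R" using h Jc by auto
    have "s \<otimes> x = s \<otimes> j1 \<oplus> (s \<otimes> r1) \<otimes> a" using h c a s by (simp add: R.r_distr R.m_assoc)
    moreover have "s \<otimes> j1 \<in> Idl S" using ideal.I_l_closed[OF J h(2) s] .
    ultimately show "s \<otimes> x \<in> {x \<in> carrier R. \<exists>j\<in>Idl S. \<exists>r\<in>carrier R. x = j \<oplus> r \<otimes> a}"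
      using h s R.m_closed[OF s h(1)] by auto
  qed auto
  moreover have "insert a S \<subseteq> D"
  proof
    fix x assume "x \<in> insert a S"
    then show "x \<in> D"
    proof
      assume "x = a"
      then have "x = \<zero> \<oplus> \<one> \<otimes> a" using a by simp
      then show "x \<in> D" unfolding D_def using a additive_subgroup.zero_closed[OF ideal.axioms(1)[OF J]] by blast
    next
      assume "x \<in> S"
      then have xI: "x \<in> Idl S" using genideal_self[OF S] by blast
      have "x = x \<oplus> \<zero> \<otimes> a" using a \<open>x \<in> S\<close> S by auto
      then show "x \<in> D" unfolding D_def using xI Jc by blast
    qed
  qed
  ultimately have "Idl (insert a S) \<subseteq> D" by (rule genideal_minimal)
  then show ?thesis using i unfolding D_def by blast
qed

lemma W_lemma:
  assumes acc: acc
  shows "finite S \<Longrightarrow> S \<subseteq> carrier R \<Longrightarrow> subm B0 \<Longrightarrow> subm N \<Longrightarrow>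
    \<exists>n. submod_sum M (ideal_smult R M (ideal_pow R (Idl S) n) (carrier M)) B0 \<inter> N
        \<subseteq> submod_sum M (ideal_smult R M (ideal_pow R (Idl S) l) N) B0"
proof (induction S arbitrary: B0 N l rule: finite_induct)
  case empty
  have Z: "Idl {} \<subseteq> {\<zero>}" using zeroideal by (rule genideal_minimal) simp
  show ?case
  proof (cases l)
    case 0
    have "N \<subseteq> submod_sum M (ideal_smult R M (ideal_pow R (Idl {}) l) N) B0"
      using 0 ideal_smult_carrierR[OF empty(3)] submod_sum_left[OF empty(2) subm_carr[OF empty(3)]] by simp
    then show ?thesis by blast
  next
    case (Suc l')
    have "ideal_pow R (Idl {}) l \<subseteq> Idl {}"
      using Suc ideal_prod_inter[OF genideal_ideal ideal_pow_ideal[OF genideal_ideal]] by auto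
    then have P: "ideal_pow R (Idl {}) l \<subseteq> {\<zero>}" using Z by blast
    have "ideal_smult R M (ideal_pow R (Idl {}) l) (carrier M) \<subseteq> {\<zero>\<^bsub>M\<^esub>}"
    proof (rule ideal_smult_least[OF subm_zero_set])
      fix b x assume "b \<in> ideal_pow R (Idl {}) l" "x \<in> carrier M"
      then show "b \<odot>\<^bsub>M\<^esub> x \<in> {\<zero>\<^bsub>M\<^esub>}" using P by auto
    qed
    have "submod_sum M (ideal_smult R M (ideal_pow R (Idl {}) l) (carrier M)) B0 \<inter> N
        \<subseteq> submod_sum M (ideal_smult R M (ideal_pow R (Idl {}) l) N) B0"
    proof
      fix z assume z: "z \<in> submod_sum M (ideal_smult R M (ideal_pow R (Idl {}) l) (carrier M)) B0 \<inter> N"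
      then obtain u b where ub: "u \<in> ideal_smult R M (ideal_pow R (Idl {}) l) (carrier M)" "b \<in> B0" "z = u \<oplus>\<^bsub>M\<^esub> b"
        by (auto elim: submod_sumE)
      then have "u = \<zero>\<^bsub>M\<^esub>" using \<open>ideal_smult R M (ideal_pow R (Idl {}) l) (carrier M) \<subseteq> {\<zero>\<^bsub>M\<^esub>}\<close> by blast
      then have "z = \<zero>\<^bsub>M\<^esub> \<oplus>\<^bsub>M\<^esub> b" using ub by simp
      then show "z \<in> submod_sum M (ideal_smult R M (ideal_pow R (Idl {}) l) N) B0"
        using submod_sumI[OF ideal_smult.zero ub(2)] by simp
    qed
    then show ?thesis by blast
  qed
next
  case (insert a S)
  have a: "a \<in> carrier R" and S: "S \<subseteq> carrier R" using insert.prems by auto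
  define J where "J = Idl S"
  define I where "I = Idl (insert a S)"
  have J: "ideal J R" unfolding J_def using S by (rule genideal_ideal)
  have I: "ideal I R" unfolding I_def using insert.prems(1) by (rule genideal_ideal)
  have aI: "a \<in> I" unfolding I_def using genideal_self[OF insert.prems(1)] by blast
  have JI: "J \<subseteq> I" unfolding I_def J_def using insert.prems(1) by (intro subset_Idl_subset) auto
  have dec: "\<And>i. i \<in> I \<Longrightarrow> \<exists>j\<in>J. \<exists>r\<in>carrier R. i = j \<oplus> r \<otimes> a"
    unfolding I_def J_def using Idl_insert_dec[OF S a] by blast
  note B0 = insert.prems(2) and N = insert.prems(3)
  obtain p where p: "submod_sum M (ideal_smult R M (ideal_pow R J p) (carrier M)) B0 \<inter> N
        \<subseteq> submod_sum M (ideal_smult R M (ideal_pow R J l) N) B0"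
    using insert.IH[OF S B0 N] unfolding J_def by blast
  have Jp: "subm (ideal_smult R M (ideal_pow R J p) (carrier M))"
    using ideal_pow_ideal[OF J] by (intro ideal_smult_subm) auto
  have JB: "subm (submod_sum M (ideal_smult R M (ideal_pow R J p) (carrier M)) B0)"
    using Jp B0 by (rule submod_sum_subm)
  obtain c :: nat where c: "\<And>(q::nat) y. q \<ge> c \<Longrightarrow> y \<in> carrier M \<Longrightarrow>
      a [^] q \<odot>\<^bsub>M\<^esub> y \<in> submod_sum M N (submod_sum M (ideal_smult R M (ideal_pow R J p) (carrier M)) B0) \<Longrightarrow>
      a [^] q \<odot>\<^bsub>M\<^esub> y \<in> submod_sum M ((\<lambda>x. a [^] (q - c) \<odot>\<^bsub>M\<^esub> x) ` N) (submod_sum M (ideal_smult R M (ideal_pow R J p) (carrier M)) B0)"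
    using principal_AR[OF acc a N JB] by blast
  define q where "q = c + l"
  have IlN: "subm (ideal_smult R M (ideal_pow R I l) N)"
    using ideal_pow_ideal[OF I] subm_carr[OF N] by (intro ideal_smult_subm) auto
  have "submod_sum M (ideal_smult R M (ideal_pow R I (p + q)) (carrier M)) B0 \<inter> N
        \<subseteq> submod_sum M (ideal_smult R M (ideal_pow R I l) N) B0"
  proof
    fix z assume z: "z \<in> submod_sum M (ideal_smult R M (ideal_pow R I (p + q)) (carrier M)) B0 \<inter> N"
    then have zN: "z \<in> N" by blast
    from z obtain u b0 where ub: "u \<in> ideal_smult R M (ideal_pow R I (p + q)) (carrier M)" "b0 \<in> B0" "z = u \<oplus>\<^bsub>M\<^esub> b0"
      by (auto elim: submod_sumE)
    have "u \<in> submod_sum M (ideal_smult R M (ideal_pow R J p) (carrier M)) ((\<lambda>y. a [^] q \<odot>\<^bsub>M\<^esub> y) ` carrier M)"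
      using pow_split[OF I J a dec, of p q] ub(1) by blast
    then obtain j t where jt: "j \<in> ideal_smult R M (ideal_pow R J p) (carrier M)"
      "t \<in> (\<lambda>y. a [^] q \<odot>\<^bsub>M\<^esub> y) ` carrier M" "u = j \<oplus>\<^bsub>M\<^esub> t" by (rule submod_sumE)
    then obtain y where y: "y \<in> carrier M" "t = a [^] q \<odot>\<^bsub>M\<^esub> y" by blast
    have aqc: "a [^] q \<in> carrier R" using a by (rule R.nat_pow_closed)
    have jc: "j \<in> carrier M" using jt(1) subm_carr[OF Jp] by blast
    have b0c: "b0 \<in> carrier M" using ub(2) subm_carr[OF B0] by blast
    have tc: "t \<in> carrier M" using y aqc by simp
    have zc: "z \<in> carrier M" using zN subm_carr[OF N] by blast
    have jb: "j \<oplus>\<^bsub>M\<^esub> b0 \<in> submod_sum M (ideal_smult R M (ideal_pow R J p) (carrier M)) B0"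
      using jt(1) ub(2) by (rule submod_sumI)
    have "z = (j \<oplus>\<^bsub>M\<^esub> b0) \<oplus>\<^bsub>M\<^esub> t" using ub(3) jt(3) jc b0c tc by (simp add: M.a_ac)
    then have "t = z \<ominus>\<^bsub>M\<^esub> (j \<oplus>\<^bsub>M\<^esub> b0)" using jc b0c tc by (intro M.eq_minus_left) auto
    also have "\<dots> \<in> submod_sum M N (submod_sum M (ideal_smult R M (ideal_pow R J p) (carrier M)) B0)"
      unfolding a_minus_def using zN subm_neg[OF JB jb] by (rule submod_sumI)
    finally have "a [^] q \<odot>\<^bsub>M\<^esub> y \<in> submod_sum M N (submod_sum M (ideal_smult R M (ideal_pow R J p) (carrier M)) B0)"
      using y by simp
    then have "a [^] q \<odot>\<^bsub>M\<^esub> y \<in> submod_sum M ((\<lambda>x. a [^] (q - c) \<odot>\<^bsub>M\<^esub> x) ` N) (submod_sum M (ideal_smult R M (ideal_pow R J p) (carrier M)) B0)"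
      using c[of q y] y q_def by simp
    then obtain v t' where vt: "v \<in> (\<lambda>x. a [^] (q - c) \<odot>\<^bsub>M\<^esub> x) ` N"
      "t' \<in> submod_sum M (ideal_smult R M (ideal_pow R J p) (carrier M)) B0" "t = v \<oplus>\<^bsub>M\<^esub> t'"
      unfolding y(2) by (rule submod_sumE)
    then obtain \<nu> where nu: "\<nu> \<in> N" "v = a [^] l \<odot>\<^bsub>M\<^esub> \<nu>" unfolding q_def by auto
    have alc: "a [^] l \<in> carrier R" using a by (rule R.nat_pow_closed)
    have vN: "v \<in> N" using nu subm_smult[OF N alc] by simp
    have vc: "v \<in> carrier M" using vN subm_carr[OF N] by blast
    have t'c: "t' \<in> carrier M" using vt(2) subm_carr[OF JB] by blast
    define w where "w = j \<oplus>\<^bsub>M\<^esub> t' \<oplus>\<^bsub>M\<^esub> b0"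
    have wc: "w \<in> carrier M" unfolding w_def using jc t'c b0c by simp
    have zw: "z = v \<oplus>\<^bsub>M\<^esub> w"
      unfolding w_def using ub(3) jt(3) vt(3) jc b0c t'c vc by (simp add: M.a_ac)
    have "w \<in> submod_sum M (ideal_smult R M (ideal_pow R J p) (carrier M)) B0"
    proof -
      have "j \<in> submod_sum M (ideal_smult R M (ideal_pow R J p) (carrier M)) B0"
        using submod_sum_left[OF B0] jt(1) subm_carr[OF Jp] by blast
      moreover have "b0 \<in> submod_sum M (ideal_smult R M (ideal_pow R J p) (carrier M)) B0"
        using submod_sum_right[OF Jp] ub(2) subm_carr[OF B0] by blast
      ultimately show ?thesis unfolding w_def using vt(2) subm_add[OF JB] by blast
    qed
    moreover have "w \<in> N"
    proof -
      have "w = z \<ominus>\<^bsub>M\<^esub> v" using zw vc wc by (intro M.eq_minus_left) auto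
      then show ?thesis using subm_diff[OF N zN vN] by simp
    qed
    ultimately have "w \<in> submod_sum M (ideal_smult R M (ideal_pow R J l) N) B0" using p by blast
    then obtain w1 b' where wb: "w1 \<in> ideal_smult R M (ideal_pow R J l) N" "b' \<in> B0" "w = w1 \<oplus>\<^bsub>M\<^esub> b'"
      by (auto elim: submod_sumE)
    have w1I: "w1 \<in> ideal_smult R M (ideal_pow R I l) N"
      using ideal_smult_mono[OF ideal_pow_mono[OF JI] order_refl] wb(1) by blast
    have vI: "v \<in> ideal_smult R M (ideal_pow R I l) N"
      unfolding nu(2) using pow_in_ideal_pow[OF aI ideal_sub_carrier[OF I]] nu(1) by (rule ideal_smult.gen)
    have w1c: "w1 \<in> carrier M" using w1I subm_carr[OF IlN] by blast
    have b'c: "b' \<in> carrier M" using wb(2) subm_carr[OF B0] by blast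
    have "z = (v \<oplus>\<^bsub>M\<^esub> w1) \<oplus>\<^bsub>M\<^esub> b'" using zw wb(3) vc w1c b'c by (simp add: M.a_ac)
    moreover have "v \<oplus>\<^bsub>M\<^esub> w1 \<in> ideal_smult R M (ideal_pow R I l) N" using subm_add[OF IlN vI w1I] .
    ultimately show "z \<in> submod_sum M (ideal_smult R M (ideal_pow R I l) N) B0"
      using wb(2) by (simp add: submod_sumI)
  qed
  then show ?case unfolding I_def by blast
qed

end



definition prodmod :: "('a, 'c, 'd) module_scheme \<Rightarrow> nat \<Rightarrow> ('a, nat \<Rightarrow> 'c) module" where
  "prodmod M r = \<lparr>carrier = {f. (\<forall>i<r. f i \<in> carrier M) \<and> (\<forall>i\<ge>r. f i = \<zero>\<^bsub>M\<^esub>)},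
     monoid.mult = (\<lambda>f g. f), monoid.one = (\<lambda>i. \<zero>\<^bsub>M\<^esub>), ring.zero = (\<lambda>i. \<zero>\<^bsub>M\<^esub>),
     ring.add = (\<lambda>f g i. f i \<oplus>\<^bsub>M\<^esub> g i), module.smult = (\<lambda>a f i. a \<odot>\<^bsub>M\<^esub> f i)\<rparr>"

lemma prodmod_simps:
  "carrier (prodmod M r) = {f. (\<forall>i<r. f i \<in> carrier M) \<and> (\<forall>i\<ge>r. f i = \<zero>\<^bsub>M\<^esub>)}"
  "\<zero>\<^bsub>prodmod M r\<^esub> = (\<lambda>i. \<zero>\<^bsub>M\<^esub>)"
  "f \<oplus>\<^bsub>prodmod M r\<^esub> g = (\<lambda>i. f i \<oplus>\<^bsub>M\<^esub> g i)"
  "a \<odot>\<^bsub>prodmod M r\<^esub> f = (\<lambda>i. a \<odot>\<^bsub>M\<^esub> f i)"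
  unfolding prodmod_def by simp_all

context module
begin

lemma prodmod_carrier_iff: "f \<in> carrier (prodmod M r) \<longleftrightarrow> (\<forall>i<r. f i \<in> carrier M) \<and> (\<forall>i\<ge>r. f i = \<zero>\<^bsub>M\<^esub>)"
  by (simp add: prodmod_simps)

lemma prodmod_module: "module R (prodmod M r)"
proof (rule moduleI)
  show "cring R" by (rule is_cring)
  show "abelian_group (prodmod M r)"
  proof (rule abelian_groupI)
    fix x y assume "x \<in> carrier (prodmod M r)" "y \<in> carrier (prodmod M r)"
    then show "x \<oplus>\<^bsub>prodmod M r\<^esub> y \<in> carrier (prodmod M r)" by (simp add: prodmod_simps)
  next
    show "\<zero>\<^bsub>prodmod M r\<^esub> \<in> carrier (prodmod M r)" by (simp add: prodmod_simps)
  next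
    fix x y z assume "x \<in> carrier (prodmod M r)" "y \<in> carrier (prodmod M r)" "z \<in> carrier (prodmod M r)"
    then show "x \<oplus>\<^bsub>prodmod M r\<^esub> y \<oplus>\<^bsub>prodmod M r\<^esub> z = x \<oplus>\<^bsub>prodmod M r\<^esub> (y \<oplus>\<^bsub>prodmod M r\<^esub> z)"
      by (auto simp: prodmod_simps M.a_assoc intro!: ext) (metis M.a_assoc M.zero_closed not_le)
  next
    fix x y assume "x \<in> carrier (prodmod M r)" "y \<in> carrier (prodmod M r)"
    then show "x \<oplus>\<^bsub>prodmod M r\<^esub> y = y \<oplus>\<^bsub>prodmod M r\<^esub> x"
      by (auto simp: prodmod_simps intro!: ext) (metis M.a_comm M.zero_closed not_le)
  next
    fix x assume "x \<in> carrier (prodmod M r)"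
    then show "\<zero>\<^bsub>prodmod M r\<^esub> \<oplus>\<^bsub>prodmod M r\<^esub> x = x"
      by (auto simp: prodmod_simps intro!: ext) (metis M.l_zero M.zero_closed not_le)
  next
    fix x assume x: "x \<in> carrier (prodmod M r)"
    let ?y = "\<lambda>i. \<ominus>\<^bsub>M\<^esub> x i"
    have "?y \<in> carrier (prodmod M r)" using x by (auto simp: prodmod_simps)
    moreover have "?y \<oplus>\<^bsub>prodmod M r\<^esub> x = \<zero>\<^bsub>prodmod M r\<^esub>"
      using x by (auto simp: prodmod_simps intro!: ext) (metis M.l_neg M.zero_closed not_le)
    ultimately show "\<exists>y\<in>carrier (prodmod M r). y \<oplus>\<^bsub>prodmod M r\<^esub> x = \<zero>\<^bsub>prodmod M r\<^esub>" by blast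
  qed
next
  fix a x assume "a \<in> carrier R" "x \<in> carrier (prodmod M r)"
  then show "a \<odot>\<^bsub>prodmod M r\<^esub> x \<in> carrier (prodmod M r)" by (simp add: prodmod_simps)
next
  fix a b x assume "a \<in> carrier R" "b \<in> carrier R" "x \<in> carrier (prodmod M r)"
  then show "(a \<oplus> b) \<odot>\<^bsub>prodmod M r\<^esub> x = a \<odot>\<^bsub>prodmod M r\<^esub> x \<oplus>\<^bsub>prodmod M r\<^esub> b \<odot>\<^bsub>prodmod M r\<^esub> x"
    by (auto simp: prodmod_simps smult_l_distr intro!: ext) (metis M.zero_closed not_le smult_l_distr)
next
  fix a x y assume "a \<in> carrier R" "x \<in> carrier (prodmod M r)" "y \<in> carrier (prodmod M r)"
  then show "a \<odot>\<^bsub>prodmod M r\<^esub> (x \<oplus>\<^bsub>prodmod M r\<^esub> y) = a \<odot>\<^bsub>prodmod M r\<^esub> x \<oplus>\<^bsub>prodmod M r\<^esub> a \<odot>\<^bsub>prodmod M r\<^esub> y"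
    by (auto simp: prodmod_simps smult_r_distr intro!: ext) (metis M.zero_closed not_le smult_r_distr)
next
  fix a b x assume "a \<in> carrier R" "b \<in> carrier R" "x \<in> carrier (prodmod M r)"
  then show "(a \<otimes> b) \<odot>\<^bsub>prodmod M r\<^esub> x = a \<odot>\<^bsub>prodmod M r\<^esub> (b \<odot>\<^bsub>prodmod M r\<^esub> x)"
    by (auto simp: prodmod_simps smult_assoc1 intro!: ext) (metis M.zero_closed not_le smult_assoc1)
next
  fix x assume "x \<in> carrier (prodmod M r)"
  then show "\<one> \<odot>\<^bsub>prodmod M r\<^esub> x = x"
    by (auto simp: prodmod_simps intro!: ext) (metis M.zero_closed not_le smult_one)
qed


definition ev :: "nat \<Rightarrow> 'c \<Rightarrow> nat \<Rightarrow> 'c" where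
  "ev i x = (\<lambda>j. if j = i then x else \<zero>\<^bsub>M\<^esub>)"

definition EV :: "nat \<Rightarrow> 'c set \<Rightarrow> (nat \<Rightarrow> 'c) set" where
  "EV r Y = (\<lambda>p. ev (fst p) (snd p)) ` ({..<r} \<times> Y)"

lemma ev_in_ideal_smult:
  assumes I: "ideal I R" and Y: "Y \<subseteq> carrier M" and i: "i < r" and x: "x \<in> ideal_smult R M I Y"
  shows "ev i x \<in> ideal_smult R (prodmod M r) I (EV r Y)"
  using x
proof induction
  case zero
  have "ev i \<zero>\<^bsub>M\<^esub> = \<zero>\<^bsub>prodmod M r\<^esub>" by (simp add: ev_def prodmod_simps fun_eq_iff)
  then show ?case by (simp add: ideal_smult.zero)
next
  case (gen a y)
  have ac: "a \<in> carrier R" using gen ideal_sub_carrier[OF I] by blast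
  have "ev i (a \<odot>\<^bsub>M\<^esub> y) = a \<odot>\<^bsub>prodmod M r\<^esub> ev i y"
    using ac by (simp add: ev_def prodmod_simps fun_eq_iff)
  moreover have "ev i y \<in> EV r Y" unfolding EV_def using gen i by force
  ultimately show ?case using ideal_smult.gen[OF gen(1)] by metis
next
  case (add u v)
  have "ev i (u \<oplus>\<^bsub>M\<^esub> v) = ev i u \<oplus>\<^bsub>prodmod M r\<^esub> ev i v"
    by (simp add: ev_def prodmod_simps fun_eq_iff)
  then show ?case using ideal_smult.add[OF add(3) add(4)] by metis
qed

lemma tuple_in_ideal_smult:
  assumes I: "ideal I R" and Y: "Y \<subseteq> carrier M" and f: "f \<in> carrier (prodmod M r)"
    and fi: "\<And>i. i < r \<Longrightarrow> f i \<in> ideal_smult R M I Y"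
  shows "f \<in> ideal_smult R (prodmod M r) I (EV r Y)"
proof -
  interpret F: module R "prodmod M r" by (rule prodmod_module)
  define tr where "tr t = (\<lambda>j. if j < t then f j else \<zero>\<^bsub>M\<^esub>)" for t
  have "t \<le> r \<Longrightarrow> tr t \<in> ideal_smult R (prodmod M r) I (EV r Y)" for t
  proof (induction t)
    case 0
    have "tr 0 = \<zero>\<^bsub>prodmod M r\<^esub>" by (simp add: tr_def prodmod_simps)
    then show ?case by (simp add: ideal_smult.zero)
  next
    case (Suc t)
    have fc: "f t \<in> carrier M" using f Suc.prems by (simp add: prodmod_simps)
    have "tr (Suc t) = tr t \<oplus>\<^bsub>prodmod M r\<^esub> ev t (f t)"
    proof (rule ext)
      fix j
      have "f j \<in> carrier M" if "j < r" using f that by (simp add: prodmod_simps)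
      then show "tr (Suc t) j = (tr t \<oplus>\<^bsub>prodmod M r\<^esub> ev t (f t)) j"
        using fc Suc.prems by (auto simp: tr_def ev_def prodmod_simps)
    qed
    moreover have "ev t (f t) \<in> ideal_smult R (prodmod M r) I (EV r Y)"
      using Suc.prems fi[of t] by (intro ev_in_ideal_smult[OF I Y]) auto
    moreover have "tr t \<in> ideal_smult R (prodmod M r) I (EV r Y)" using Suc by simp
    ultimately show ?case using ideal_smult.add by metis
  qed
  moreover have "tr r = f" using f by (auto simp: tr_def prodmod_simps fun_eq_iff)
  ultimately show ?thesis by blast
qed

lemma EV_carrier: "Y \<subseteq> carrier M \<Longrightarrow> EV r Y \<subseteq> carrier (prodmod M r)"
  unfolding EV_def by (auto simp: ev_def prodmod_simps)

lemma prodmod_acc: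
  assumes noeth: "noetherian_ring R" and fg: "fin_gen_module R M"
  shows "module.acc R (prodmod M r)"
proof -
  interpret F: module R "prodmod M r" by (rule prodmod_module)
  obtain G where G: "finite G" "G \<subseteq> carrier M" "carrier M \<subseteq> span G"
    using span_of_fin_gen[OF fg] by blast
  have "carrier (prodmod M r) \<subseteq> F.span (EV r G)"
  proof
    fix f assume f: "f \<in> carrier (prodmod M r)"
    show "f \<in> F.span (EV r G)"
      using f G(3) by (intro tuple_in_ideal_smult[OF oneideal G(2) f]) (auto simp: prodmod_simps)
  qed
  moreover have "finite (EV r G)" unfolding EV_def using G(1) by simp
  ultimately show ?thesis using F.acc_of_fg[OF noeth] EV_carrier[OF G(2)] by blast
qed

end



context module
begin

lemma H0_subm:
  assumes m: "ideal m R" shows "subm (H0 R M m)"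
proof (rule submI)
  show "H0 R M m \<subseteq> carrier M" unfolding H0_def by blast
  show "\<zero>\<^bsub>M\<^esub> \<in> H0 R M m" unfolding H0_def
  proof (intro CollectI conjI exI ballI)
    fix a assume "a \<in> ideal_pow R m 0" then show "a \<odot>\<^bsub>M\<^esub> \<zero>\<^bsub>M\<^esub> = \<zero>\<^bsub>M\<^esub>" by simp
  qed simp
next
  fix x y assume x: "x \<in> H0 R M m" and y: "y \<in> H0 R M m"
  then obtain n1 n2 where n: "\<forall>a\<in>ideal_pow R m n1. a \<odot>\<^bsub>M\<^esub> x = \<zero>\<^bsub>M\<^esub>" "\<forall>a\<in>ideal_pow R m n2. a \<odot>\<^bsub>M\<^esub> y = \<zero>\<^bsub>M\<^esub>"
    and c: "x \<in> carrier M" "y \<in> carrier M" unfolding H0_def by blast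
  have "\<forall>a\<in>ideal_pow R m (max n1 n2). a \<odot>\<^bsub>M\<^esub> (x \<oplus>\<^bsub>M\<^esub> y) = \<zero>\<^bsub>M\<^esub>"
  proof
    fix a assume a: "a \<in> ideal_pow R m (max n1 n2)"
    have ac: "a \<in> carrier R" using a ideal_sub_carrier[OF ideal_pow_ideal[OF m]] by blast
    have "a \<in> ideal_pow R m n1" "a \<in> ideal_pow R m n2"
      using a ideal_pow_antimono[OF m, of n1 "max n1 n2"] ideal_pow_antimono[OF m, of n2 "max n1 n2"] by auto
    then show "a \<odot>\<^bsub>M\<^esub> (x \<oplus>\<^bsub>M\<^esub> y) = \<zero>\<^bsub>M\<^esub>" using n ac c by (simp add: smult_r_distr)
  qed
  then show "x \<oplus>\<^bsub>M\<^esub> y \<in> H0 R M m" unfolding H0_def using c by blast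
next
  fix r x assume r: "r \<in> carrier R" and x: "x \<in> H0 R M m"
  then obtain n1 where n: "\<forall>a\<in>ideal_pow R m n1. a \<odot>\<^bsub>M\<^esub> x = \<zero>\<^bsub>M\<^esub>" and c: "x \<in> carrier M"
    unfolding H0_def by blast
  have "\<forall>a\<in>ideal_pow R m n1. a \<odot>\<^bsub>M\<^esub> (r \<odot>\<^bsub>M\<^esub> x) = \<zero>\<^bsub>M\<^esub>"
  proof
    fix a assume a: "a \<in> ideal_pow R m n1"
    have ac: "a \<in> carrier R" using a ideal_sub_carrier[OF ideal_pow_ideal[OF m]] by blast
    have "a \<odot>\<^bsub>M\<^esub> (r \<odot>\<^bsub>M\<^esub> x) = r \<odot>\<^bsub>M\<^esub> (a \<odot>\<^bsub>M\<^esub> x)"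
      using ac r c by (simp add: smult_assoc1[symmetric] R.m_comm)
    then show "a \<odot>\<^bsub>M\<^esub> (r \<odot>\<^bsub>M\<^esub> x) = \<zero>\<^bsub>M\<^esub>" using n a r by simp
  qed
  then show "r \<odot>\<^bsub>M\<^esub> x \<in> H0 R M m" unfolding H0_def using c r by auto
qed

lemma H0_killed:
  assumes noeth: "noetherian_ring R" and fg: "fin_gen_module R M" and m: "ideal m R"
  shows "\<exists>s. \<forall>a\<in>ideal_pow R m s. \<forall>h\<in>H0 R M m. a \<odot>\<^bsub>M\<^esub> h = \<zero>\<^bsub>M\<^esub>"
proof -
  obtain G where G: "finite G" "G \<subseteq> carrier M" "carrier M \<subseteq> span G"
    using span_of_fin_gen[OF fg] by blast
  have sH: "subm (H0 R M m)" using H0_subm[OF m] .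
  obtain T where T: "finite T" "T \<subseteq> H0 R M m" "H0 R M m = span T"
    using fg_aux[OF noeth G(1) G(2) sH] G(3) subm_carr[OF sH] by blast
  have "\<forall>t\<in>T. \<exists>n. \<forall>a\<in>ideal_pow R m n. a \<odot>\<^bsub>M\<^esub> t = \<zero>\<^bsub>M\<^esub>" using T(2) unfolding H0_def by blast
  then obtain nt where nt: "\<And>t. t \<in> T \<Longrightarrow> \<forall>a\<in>ideal_pow R m (nt t). a \<odot>\<^bsub>M\<^esub> t = \<zero>\<^bsub>M\<^esub>"
    using bchoice[of T "\<lambda>t n. \<forall>a\<in>ideal_pow R m n. a \<odot>\<^bsub>M\<^esub> t = \<zero>\<^bsub>M\<^esub>"] by blast
  define s where "s = Max (insert 0 (nt ` T))"
  have Tc: "T \<subseteq> carrier M" using T(2) unfolding H0_def by blast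
  have "\<forall>a\<in>ideal_pow R m s. a \<odot>\<^bsub>M\<^esub> h = \<zero>\<^bsub>M\<^esub>" if h: "h \<in> span T" for h
    using h
  proof induction
    case zero
    show ?case
    proof
      fix a assume "a \<in> ideal_pow R m s"
      then have "a \<in> carrier R" using ideal_sub_carrier[OF ideal_pow_ideal[OF m]] by blast
      then show "a \<odot>\<^bsub>M\<^esub> \<zero>\<^bsub>M\<^esub> = \<zero>\<^bsub>M\<^esub>" by simp
    qed
  next
    case (gen b t)
    show ?case
    proof
      fix a assume a: "a \<in> ideal_pow R m s"
      have ac: "a \<in> carrier R" using a ideal_sub_carrier[OF ideal_pow_ideal[OF m]] by blast
      have "nt t \<le> s" unfolding s_def using T(1) gen(2) by (intro Max_ge) auto
      then have "a \<in> ideal_pow R m (nt t)" using a ideal_pow_antimono[OF m] by blast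
      then have "a \<odot>\<^bsub>M\<^esub> t = \<zero>\<^bsub>M\<^esub>" using nt[OF gen(2)] by blast
      moreover have "a \<odot>\<^bsub>M\<^esub> (b \<odot>\<^bsub>M\<^esub> t) = b \<odot>\<^bsub>M\<^esub> (a \<odot>\<^bsub>M\<^esub> t)"
        using ac gen Tc by (simp add: smult_assoc1[symmetric] R.m_comm subsetD)
      ultimately show "a \<odot>\<^bsub>M\<^esub> (b \<odot>\<^bsub>M\<^esub> t) = \<zero>\<^bsub>M\<^esub>" using gen by simp
    qed
  next
    case (add u v)
    have "u \<in> carrier M" "v \<in> carrier M" using add subm_carr[OF span_subm[OF Tc]] by auto
    show ?case
    proof
      fix a assume a: "a \<in> ideal_pow R m s"
      then have "a \<in> carrier R" using ideal_sub_carrier[OF ideal_pow_ideal[OF m]] by blast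
      then show "a \<odot>\<^bsub>M\<^esub> (u \<oplus>\<^bsub>M\<^esub> v) = \<zero>\<^bsub>M\<^esub>"
        using add a \<open>u \<in> carrier M\<close> \<open>v \<in> carrier M\<close> by (simp add: smult_r_distr)
    qed
  qed
  then show ?thesis using T(3) by blast
qed

lemma Z_lemma:
  assumes m: "ideal m R"
  shows "x \<in> carrier M \<Longrightarrow> (\<forall>b\<in>ideal_pow R m k. \<forall>a\<in>ideal_pow R m s. a \<odot>\<^bsub>M\<^esub> (b \<odot>\<^bsub>M\<^esub> x) = \<zero>\<^bsub>M\<^esub>)
    \<Longrightarrow> \<forall>c\<in>ideal_pow R m (s + k). c \<odot>\<^bsub>M\<^esub> x = \<zero>\<^bsub>M\<^esub>"
proof (induction k arbitrary: x)
  case 0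
  show ?case
  proof
    fix c assume "c \<in> ideal_pow R m (s + 0)"
    then show "c \<odot>\<^bsub>M\<^esub> x = \<zero>\<^bsub>M\<^esub>" using 0 bspec[OF 0(2), of \<one>] by simp
  qed
next
  case (Suc k)
  have mc: "m \<subseteq> carrier R" using ideal_sub_carrier[OF m] .
  have pc: "ideal_pow R m j \<subseteq> carrier R" for j using ideal_sub_carrier[OF ideal_pow_ideal[OF m]] .
  have ix: "\<forall>c\<in>ideal_pow R m (s + k). c \<odot>\<^bsub>M\<^esub> (i \<odot>\<^bsub>M\<^esub> x) = \<zero>\<^bsub>M\<^esub>" if i: "i \<in> m" for i
  proof (rule Suc.IH)
    show "i \<odot>\<^bsub>M\<^esub> x \<in> carrier M" using i mc Suc.prems by auto
    show "\<forall>b\<in>ideal_pow R m k. \<forall>a\<in>ideal_pow R m s. a \<odot>\<^bsub>M\<^esub> (b \<odot>\<^bsub>M\<^esub> (i \<odot>\<^bsub>M\<^esub> x)) = \<zero>\<^bsub>M\<^esub>"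
    proof (intro ballI)
      fix b a assume b: "b \<in> ideal_pow R m k" and a: "a \<in> ideal_pow R m s"
      have bc: "b \<in> carrier R" and ic: "i \<in> carrier R" using b i mc pc by auto
      have "b \<odot>\<^bsub>M\<^esub> (i \<odot>\<^bsub>M\<^esub> x) = (b \<otimes> i) \<odot>\<^bsub>M\<^esub> x"
        using bc ic Suc.prems(1) by (simp add: smult_assoc1)
      also have "\<dots> = (i \<otimes> b) \<odot>\<^bsub>M\<^esub> x" using bc ic by (simp add: R.m_comm)
      finally have "b \<odot>\<^bsub>M\<^esub> (i \<odot>\<^bsub>M\<^esub> x) = (i \<otimes> b) \<odot>\<^bsub>M\<^esub> x" .
      moreover have "i \<otimes> b \<in> ideal_pow R m (Suc k)" using i b by (simp add: ideal_prod.prod)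
      ultimately show "a \<odot>\<^bsub>M\<^esub> (b \<odot>\<^bsub>M\<^esub> (i \<odot>\<^bsub>M\<^esub> x)) = \<zero>\<^bsub>M\<^esub>" using Suc.prems a by simp
    qed
  qed
  show ?case
  proof
    fix c assume "c \<in> ideal_pow R m (s + Suc k)"
    then have "c \<in> ideal_prod R m (ideal_pow R m (s + k))" by simp
    then show "c \<odot>\<^bsub>M\<^esub> x = \<zero>\<^bsub>M\<^esub>"
    proof induction
      case (prod i j)
      have ic: "i \<in> carrier R" and jc: "j \<in> carrier R" using prod mc pc by auto
      have "(i \<otimes> j) \<odot>\<^bsub>M\<^esub> x = (j \<otimes> i) \<odot>\<^bsub>M\<^esub> x" using ic jc by (simp add: R.m_comm)
      also have "\<dots> = j \<odot>\<^bsub>M\<^esub> (i \<odot>\<^bsub>M\<^esub> x)" using ic jc Suc.prems(1) by (simp add: smult_assoc1)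
      finally have "(i \<otimes> j) \<odot>\<^bsub>M\<^esub> x = j \<odot>\<^bsub>M\<^esub> (i \<odot>\<^bsub>M\<^esub> x)" .
      then show ?case using ix[OF prod(1)] prod(2) by simp
    next
      case (sum s1 s2)
      have "s1 \<in> carrier R" "s2 \<in> carrier R"
        using sum ideal_prod_in_carrier[OF m ideal_pow_ideal[OF m]] by auto
      then show ?case using sum Suc.prems by (simp add: smult_l_distr)
    qed
  qed
qed

lemma H0_colon:
  assumes noeth: "noetherian_ring R" and fg: "fin_gen_module R M" and m: "ideal m R"
    and x: "x \<in> carrier M" and h: "\<forall>b\<in>ideal_pow R m k. b \<odot>\<^bsub>M\<^esub> x \<in> H0 R M m"
  shows "x \<in> H0 R M m"
proof -
  obtain s where s: "\<forall>a\<in>ideal_pow R m s. \<forall>h\<in>H0 R M m. a \<odot>\<^bsub>M\<^esub> h = \<zero>\<^bsub>M\<^esub>"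
    using H0_killed[OF noeth fg m] by blast
  have "\<forall>c\<in>ideal_pow R m (s + k). c \<odot>\<^bsub>M\<^esub> x = \<zero>\<^bsub>M\<^esub>"
    using Z_lemma[OF m x] h s by blast
  then show ?thesis unfolding H0_def using x by blast
qed


lemma nth_carrierR [simp]: "set bs \<subseteq> carrier R \<Longrightarrow> i < length bs \<Longrightarrow> bs ! i \<in> carrier R"
  using nth_mem by blast

definition phi :: "'a list \<Rightarrow> 'c \<Rightarrow> nat \<Rightarrow> 'c" where
  "phi bs x = (\<lambda>i. if i < length bs then bs ! i \<odot>\<^bsub>M\<^esub> x else \<zero>\<^bsub>M\<^esub>)"

definition Qset :: "'a list \<Rightarrow> 'c set \<Rightarrow> (nat \<Rightarrow> 'c) set \<Rightarrow> (nat \<Rightarrow> 'c) set" where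
  "Qset bs Y B = {phi bs y \<oplus>\<^bsub>prodmod M (length bs)\<^esub> h | y h. y \<in> Y \<and> h \<in> B}"

lemma phi_carrier: "set bs \<subseteq> carrier R \<Longrightarrow> x \<in> carrier M \<Longrightarrow> phi bs x \<in> carrier (prodmod M (length bs))"
  by (auto simp: phi_def prodmod_simps)

lemma phi_add: "set bs \<subseteq> carrier R \<Longrightarrow> x \<in> carrier M \<Longrightarrow> y \<in> carrier M \<Longrightarrow>
   phi bs (x \<oplus>\<^bsub>M\<^esub> y) = phi bs x \<oplus>\<^bsub>prodmod M (length bs)\<^esub> phi bs y"
  by (auto simp: phi_def prodmod_simps fun_eq_iff smult_r_distr)

lemma phi_smult: "set bs \<subseteq> carrier R \<Longrightarrow> a \<in> carrier R \<Longrightarrow> x \<in> carrier M \<Longrightarrow>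
   phi bs (a \<odot>\<^bsub>M\<^esub> x) = a \<odot>\<^bsub>prodmod M (length bs)\<^esub> phi bs x"
proof -
  assume bs: "set bs \<subseteq> carrier R" and a: "a \<in> carrier R" and x: "x \<in> carrier M"
  have "bs ! i \<odot>\<^bsub>M\<^esub> (a \<odot>\<^bsub>M\<^esub> x) = a \<odot>\<^bsub>M\<^esub> (bs ! i \<odot>\<^bsub>M\<^esub> x)" if "i < length bs" for i
  proof -
    have bi: "bs ! i \<in> carrier R" using bs that nth_mem by blast
    have "bs ! i \<odot>\<^bsub>M\<^esub> (a \<odot>\<^bsub>M\<^esub> x) = (bs ! i \<otimes> a) \<odot>\<^bsub>M\<^esub> x" using bi a x by (simp add: smult_assoc1)
    also have "\<dots> = (a \<otimes> bs ! i) \<odot>\<^bsub>M\<^esub> x" using bi a by (simp add: R.m_comm)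
    also have "\<dots> = a \<odot>\<^bsub>M\<^esub> (bs ! i \<odot>\<^bsub>M\<^esub> x)" using bi a x by (simp add: smult_assoc1)
    finally show ?thesis .
  qed
  then show ?thesis using a by (auto simp: phi_def prodmod_simps fun_eq_iff)
qed

lemma Qset_subm:
  assumes bs: "set bs \<subseteq> carrier R" and Y: "subm Y" and B: "module.subm R (prodmod M (length bs)) B"
  shows "module.subm R (prodmod M (length bs)) (Qset bs Y B)"
proof -
  interpret F: module R "prodmod M (length bs)" by (rule prodmod_module)
  have Yc: "Y \<subseteq> carrier M" using subm_carr[OF Y] .
  have Bc: "B \<subseteq> carrier (prodmod M (length bs))" using F.subm_carr[OF B] .
  show ?thesis
  proof (rule F.submI)
    show "Qset bs Y B \<subseteq> carrier (prodmod M (length bs))"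
      unfolding Qset_def using phi_carrier[OF bs] Yc Bc by (auto intro!: F.add.m_closed)
    have "phi bs \<zero>\<^bsub>M\<^esub> = \<zero>\<^bsub>prodmod M (length bs)\<^esub>" using bs
      by (auto simp: phi_def prodmod_simps fun_eq_iff)
    then have "\<zero>\<^bsub>prodmod M (length bs)\<^esub> = phi bs \<zero>\<^bsub>M\<^esub> \<oplus>\<^bsub>prodmod M (length bs)\<^esub> \<zero>\<^bsub>prodmod M (length bs)\<^esub>"
      by simp
    then show "\<zero>\<^bsub>prodmod M (length bs)\<^esub> \<in> Qset bs Y B" unfolding Qset_def
      using subm_zero[OF Y] F.subm_zero[OF B] by blast
  next
    fix x y assume "x \<in> Qset bs Y B" "y \<in> Qset bs Y B"
    then obtain y1 h1 y2 h2 where h: "y1 \<in> Y" "h1 \<in> B" "y2 \<in> Y" "h2 \<in> B"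
      "x = phi bs y1 \<oplus>\<^bsub>prodmod M (length bs)\<^esub> h1" "y = phi bs y2 \<oplus>\<^bsub>prodmod M (length bs)\<^esub> h2"
      unfolding Qset_def by blast
    have c: "y1 \<in> carrier M" "y2 \<in> carrier M" "h1 \<in> carrier (prodmod M (length bs))" "h2 \<in> carrier (prodmod M (length bs))"
      using h Yc Bc by auto
    have pc: "phi bs y1 \<in> carrier (prodmod M (length bs))" "phi bs y2 \<in> carrier (prodmod M (length bs))"
      using phi_carrier[OF bs] c by auto
    have "x \<oplus>\<^bsub>prodmod M (length bs)\<^esub> y = phi bs (y1 \<oplus>\<^bsub>M\<^esub> y2) \<oplus>\<^bsub>prodmod M (length bs)\<^esub> (h1 \<oplus>\<^bsub>prodmod M (length bs)\<^esub> h2)"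
      unfolding h(5,6) phi_add[OF bs c(1,2)] using pc c by (simp add: F.a_ac)
    then show "x \<oplus>\<^bsub>prodmod M (length bs)\<^esub> y \<in> Qset bs Y B" unfolding Qset_def
      using subm_add[OF Y h(1) h(3)] F.subm_add[OF B h(2) h(4)] by blast
  next
    fix a x assume a: "a \<in> carrier R" and "x \<in> Qset bs Y B"
    then obtain y1 h1 where h: "y1 \<in> Y" "h1 \<in> B" "x = phi bs y1 \<oplus>\<^bsub>prodmod M (length bs)\<^esub> h1"
      unfolding Qset_def by blast
    have c: "y1 \<in> carrier M" "h1 \<in> carrier (prodmod M (length bs))" using h Yc Bc by auto
    have "a \<odot>\<^bsub>prodmod M (length bs)\<^esub> x = phi bs (a \<odot>\<^bsub>M\<^esub> y1) \<oplus>\<^bsub>prodmod M (length bs)\<^esub> a \<odot>\<^bsub>prodmod M (length bs)\<^esub> h1"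
      unfolding h(3) phi_smult[OF bs a c(1)] using a c phi_carrier[OF bs c(1)] by (simp add: F.smult_r_distr)
    then show "a \<odot>\<^bsub>prodmod M (length bs)\<^esub> x \<in> Qset bs Y B" unfolding Qset_def
      using subm_smult[OF Y a h(1)] F.subm_smult[OF B a h(2)] by blast
  qed
qed


lemma main_loc:
  assumes noeth: "noetherian_ring R" and m: "ideal m R" and fg: "fin_gen_module R M"
  shows "\<exists>n3 > l.
    submod_colon M (submod_sum M (ideal_smult R M (ideal_pow R m n3) (carrier M)) (H0 R M m))
                   (ideal_pow R m k)
    \<subseteq> submod_sum M (ideal_smult R M (ideal_pow R m l) (carrier M)) (H0 R M m)"
proof -
  define H where "H = H0 R M m"
  have sH: "subm H" unfolding H_def using H0_subm[OF m] .
  have Hc: "H \<subseteq> carrier M" using subm_carr[OF sH] .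
  have mc: "m \<subseteq> carrier R" using ideal_sub_carrier[OF m] .
  have pc: "ideal_pow R m j \<subseteq> carrier R" for j using ideal_sub_carrier[OF ideal_pow_ideal[OF m]] .
  obtain Bs where Bs: "Bs \<subseteq> carrier R" "finite Bs" "ideal_pow R m k = Idl Bs"
    using noetherian_ring.finetely_gen[OF noeth ideal_pow_ideal[OF m]] by blast
  obtain bs where bs_set: "set bs = Bs" using finite_list[OF Bs(2)] by blast
  have bs: "set bs \<subseteq> carrier R" using bs_set Bs(1) by simp
  obtain Sm where Sm: "Sm \<subseteq> carrier R" "finite Sm" "m = Idl Sm"
    using noetherian_ring.finetely_gen[OF noeth m] by blast
  define r where "r = length bs"
  define F where "F = prodmod M r"
  interpret F: module R F unfolding F_def by (rule prodmod_module)
  have accF: "F.acc" unfolding F_def using prodmod_acc[OF noeth fg] .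
  define B0 where "B0 = {f \<in> carrier F. \<forall>i<r. f i \<in> H}"
  have sB0: "F.subm B0"
  proof (rule F.submI)
    show "B0 \<subseteq> carrier F" unfolding B0_def by blast
    show "\<zero>\<^bsub>F\<^esub> \<in> B0" unfolding B0_def F_def using subm_zero[OF sH] by (simp add: prodmod_simps)
  next
    fix x y assume "x \<in> B0" "y \<in> B0"
    then show "x \<oplus>\<^bsub>F\<^esub> y \<in> B0" unfolding B0_def F_def
      using subm_add[OF sH] by (auto simp: prodmod_simps)
  next
    fix a x assume "a \<in> carrier R" "x \<in> B0"
    then show "a \<odot>\<^bsub>F\<^esub> x \<in> B0" unfolding B0_def F_def
      using subm_smult[OF sH] by (auto simp: prodmod_simps)
  qed
  define N' where "N' = Qset bs (carrier M) B0"
  have sN': "F.subm N'" unfolding N'_def using Qset_subm[OF bs subm_carrier] sB0 unfolding F_def r_def by simp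
  obtain n where n: "submod_sum F (ideal_smult R F (ideal_pow R m n) (carrier F)) B0 \<inter> N'
        \<subseteq> submod_sum F (ideal_smult R F (ideal_pow R m l) N') B0"
    using F.W_lemma[OF accF Sm(2) Sm(1) sB0 sN', of l] Sm(3) by blast
  define n3 where "n3 = max n (Suc l)"
  have "submod_colon M (submod_sum M (ideal_smult R M (ideal_pow R m n3) (carrier M)) H) (ideal_pow R m k)
    \<subseteq> submod_sum M (ideal_smult R M (ideal_pow R m l) (carrier M)) H"
  proof
    fix x assume "x \<in> submod_colon M (submod_sum M (ideal_smult R M (ideal_pow R m n3) (carrier M)) H) (ideal_pow R m k)"
    then have x: "x \<in> carrier M" and xc: "\<And>a. a \<in> ideal_pow R m k \<Longrightarrow>
        a \<odot>\<^bsub>M\<^esub> x \<in> submod_sum M (ideal_smult R M (ideal_pow R m n3) (carrier M)) H"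
      unfolding submod_colon_def by auto
    have sub3: "ideal_smult R M (ideal_pow R m n3) (carrier M) \<subseteq> ideal_smult R M (ideal_pow R m n) (carrier M)"
      using ideal_smult_mono[OF ideal_pow_antimono[OF m, of n n3]] unfolding n3_def by auto
    have "\<forall>i\<in>{..<r}. \<exists>p. fst p \<in> ideal_smult R M (ideal_pow R m n) (carrier M) \<and> snd p \<in> H
        \<and> bs ! i \<odot>\<^bsub>M\<^esub> x = fst p \<oplus>\<^bsub>M\<^esub> snd p"
    proof
      fix i assume "i \<in> {..<r}"
      then have "bs ! i \<in> Bs" using bs_set r_def by auto
      then have "bs ! i \<in> ideal_pow R m k" using Bs(3) genideal_self[OF Bs(1)] by auto
      then obtain u h where "u \<in> ideal_smult R M (ideal_pow R m n3) (carrier M)" "h \<in> H"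
        "bs ! i \<odot>\<^bsub>M\<^esub> x = u \<oplus>\<^bsub>M\<^esub> h" using xc by (blast elim: submod_sumE)
      then show "\<exists>p. fst p \<in> ideal_smult R M (ideal_pow R m n) (carrier M) \<and> snd p \<in> H
        \<and> bs ! i \<odot>\<^bsub>M\<^esub> x = fst p \<oplus>\<^bsub>M\<^esub> snd p" using sub3 by (intro exI[of _ "(u, h)"]) auto
    qed
    then obtain pf where pf: "\<And>i. i < r \<Longrightarrow> fst (pf i) \<in> ideal_smult R M (ideal_pow R m n) (carrier M) \<and> snd (pf i) \<in> H
        \<and> bs ! i \<odot>\<^bsub>M\<^esub> x = fst (pf i) \<oplus>\<^bsub>M\<^esub> snd (pf i)"
      using bchoice[of "{..<r}"] by (metis lessThan_iff)
    define fu where "fu i = (if i < r then fst (pf i) else \<zero>\<^bsub>M\<^esub>)" for i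
    define fh where "fh i = (if i < r then snd (pf i) else \<zero>\<^bsub>M\<^esub>)" for i
    have nc: "ideal_smult R M (ideal_pow R m n) (carrier M) \<subseteq> carrier M"
      using ideal_smult_carr[OF pc] by blast
    have fuc: "fu \<in> carrier F" unfolding F_def fu_def using pf nc by (auto simp: prodmod_simps)
    have fhB: "fh \<in> B0" unfolding B0_def F_def fh_def using pf Hc subm_zero[OF sH] by (auto simp: prodmod_simps)
    have "fu \<in> ideal_smult R F (ideal_pow R m n) (EV r (carrier M))"
      unfolding F_def using fuc[unfolded F_def] pf
      by (intro tuple_in_ideal_smult[OF ideal_pow_ideal[OF m]]) (auto simp: fu_def)
    then have fuI: "fu \<in> ideal_smult R F (ideal_pow R m n) (carrier F)"
      using F.ideal_smult_mono[OF order_refl EV_carrier[of "carrier M" r]] unfolding F_def by blast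
    have phx: "phi bs x = fu \<oplus>\<^bsub>F\<^esub> fh"
      unfolding F_def using pf by (auto simp: phi_def fu_def fh_def prodmod_simps fun_eq_iff r_def)
    have phc: "phi bs x \<in> carrier F" unfolding F_def r_def using phi_carrier[OF bs x] .
    have "phi bs x \<in> N'"
    proof -
      have "phi bs x = phi bs x \<oplus>\<^bsub>F\<^esub> \<zero>\<^bsub>F\<^esub>" using phc by simp
      moreover have "\<zero>\<^bsub>F\<^esub> \<in> B0" using F.subm_zero[OF sB0] .
      ultimately show ?thesis unfolding N'_def Qset_def F_def r_def using x by blast
    qed
    moreover have "phi bs x \<in> submod_sum F (ideal_smult R F (ideal_pow R m n) (carrier F)) B0"
      unfolding phx using fuI fhB by (rule F.submod_sumI)
    ultimately have "phi bs x \<in> submod_sum F (ideal_smult R F (ideal_pow R m l) N') B0" using n by blast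
    moreover have "ideal_smult R F (ideal_pow R m l) N' \<subseteq> Qset bs (ideal_smult R M (ideal_pow R m l) (carrier M)) B0"
    proof (rule F.ideal_smult_least)
      show "F.subm (Qset bs (ideal_smult R M (ideal_pow R m l) (carrier M)) B0)"
        using Qset_subm[OF bs ideal_smult_subm[OF ideal_pow_ideal[OF m] order_refl]] sB0 unfolding F_def r_def by simp
    next
      fix a z assume a: "a \<in> ideal_pow R m l" and z: "z \<in> N'"
      then obtain y h where yh: "y \<in> carrier M" "h \<in> B0" "z = phi bs y \<oplus>\<^bsub>F\<^esub> h"
        unfolding N'_def Qset_def F_def r_def by blast
      have ac: "a \<in> carrier R" using a pc by blast
      have hc: "h \<in> carrier F" using yh B0_def by blast
      have "a \<odot>\<^bsub>F\<^esub> z = phi bs (a \<odot>\<^bsub>M\<^esub> y) \<oplus>\<^bsub>F\<^esub> a \<odot>\<^bsub>F\<^esub> h"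
        unfolding yh(3) using phi_smult[OF bs ac yh(1)] phi_carrier[OF bs yh(1)] ac hc
        unfolding F_def r_def by (simp add: F.smult_r_distr[unfolded F_def r_def])
      moreover have "a \<odot>\<^bsub>M\<^esub> y \<in> ideal_smult R M (ideal_pow R m l) (carrier M)"
        using a yh(1) by (rule ideal_smult.gen)
      moreover have "a \<odot>\<^bsub>F\<^esub> h \<in> B0" using F.subm_smult[OF sB0 ac yh(2)] .
      ultimately show "a \<odot>\<^bsub>F\<^esub> z \<in> Qset bs (ideal_smult R M (ideal_pow R m l) (carrier M)) B0"
        unfolding Qset_def F_def r_def by blast
    qed
    ultimately obtain w b where wb: "w \<in> Qset bs (ideal_smult R M (ideal_pow R m l) (carrier M)) B0" "b \<in> B0"
      "phi bs x = w \<oplus>\<^bsub>F\<^esub> b" by (blast elim: F.submod_sumE)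
    then obtain y h where yh: "y \<in> ideal_smult R M (ideal_pow R m l) (carrier M)" "h \<in> B0"
      "w = phi bs y \<oplus>\<^bsub>F\<^esub> h" unfolding Qset_def F_def r_def by blast
    have yc: "y \<in> carrier M" using yh(1) ideal_smult_carr[OF pc] by blast
    define z where "z = x \<ominus>\<^bsub>M\<^esub> y"
    have zc: "z \<in> carrier M" unfolding z_def using x yc by simp
    have zb: "bs ! i \<odot>\<^bsub>M\<^esub> z \<in> H" if i: "i < r" for i
    proof -
      have bi: "bs ! i \<in> carrier R" using bs i r_def by simp
      have hi: "h i \<in> H" "b i \<in> H" using yh(2) wb(2) i unfolding B0_def by auto
      have "phi bs x i = (phi bs y i \<oplus>\<^bsub>M\<^esub> h i) \<oplus>\<^bsub>M\<^esub> b i"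
        using wb(3) yh(3) unfolding F_def by (simp add: prodmod_simps)
      then have e: "bs ! i \<odot>\<^bsub>M\<^esub> x = bs ! i \<odot>\<^bsub>M\<^esub> y \<oplus>\<^bsub>M\<^esub> (h i \<oplus>\<^bsub>M\<^esub> b i)"
        using i hi Hc bi yc unfolding phi_def r_def by (simp add: M.a_assoc subsetD)
      have "h i \<oplus>\<^bsub>M\<^esub> b i = bs ! i \<odot>\<^bsub>M\<^esub> x \<ominus>\<^bsub>M\<^esub> bs ! i \<odot>\<^bsub>M\<^esub> y"
        using e hi Hc bi yc by (intro M.eq_minus_left) (auto simp: subsetD)
      also have "\<dots> = bs ! i \<odot>\<^bsub>M\<^esub> z"
        unfolding z_def a_minus_def using bi x yc by (simp add: smult_r_distr smult_r_minus)
      finally show ?thesis using subm_add[OF sH hi(1) hi(2)] by simp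
    qed
    have "\<forall>a\<in>ideal_pow R m k. a \<odot>\<^bsub>M\<^esub> z \<in> H"
    proof -
      have "ideal {a \<in> carrier R. a \<odot>\<^bsub>M\<^esub> z \<in> H} R"
      proof (rule ideal_by_closure)
        show "\<zero> \<in> {a \<in> carrier R. a \<odot>\<^bsub>M\<^esub> z \<in> H}" using zc subm_zero[OF sH] by simp
      next
        fix a b assume "a \<in> {a \<in> carrier R. a \<odot>\<^bsub>M\<^esub> z \<in> H}" "b \<in> {a \<in> carrier R. a \<odot>\<^bsub>M\<^esub> z \<in> H}"
        then show "a \<oplus> b \<in> {a \<in> carrier R. a \<odot>\<^bsub>M\<^esub> z \<in> H}"
          using zc subm_add[OF sH] by (simp add: smult_l_distr)
      next
        fix c a assume "c \<in> carrier R" "a \<in> {a \<in> carrier R. a \<odot>\<^bsub>M\<^esub> z \<in> H}"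
        then show "c \<otimes> a \<in> {a \<in> carrier R. a \<odot>\<^bsub>M\<^esub> z \<in> H}"
          using zc subm_smult[OF sH] by (simp add: smult_assoc1)
      qed auto
      moreover have "Bs \<subseteq> {a \<in> carrier R. a \<odot>\<^bsub>M\<^esub> z \<in> H}"
      proof
        fix a assume "a \<in> Bs"
        then obtain i where "i < r" "a = bs ! i" using bs_set r_def by (metis in_set_conv_nth)
        then show "a \<in> {a \<in> carrier R. a \<odot>\<^bsub>M\<^esub> z \<in> H}" using zb bs r_def by simp
      qed
      ultimately have "Idl Bs \<subseteq> {a \<in> carrier R. a \<odot>\<^bsub>M\<^esub> z \<in> H}" by (rule genideal_minimal)
      then show ?thesis using Bs(3) by blast
    qed
    then have zH: "z \<in> H" unfolding H_def using H0_colon[OF noeth fg m zc] by blast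
    have "x = y \<oplus>\<^bsub>M\<^esub> z" unfolding z_def using x yc
      by (simp add: a_minus_def M.a_lcomm M.r_neg)
    then show "x \<in> submod_sum M (ideal_smult R M (ideal_pow R m l) (carrier M)) H"
      using yh(1) zH by (simp add: submod_sumI)
  qed
  moreover have "n3 > l" unfolding n3_def by simp
  ultimately show ?thesis unfolding H_def by blast
qed

end

theorem lemma2p3:
  fixes R :: "('a, 'b) ring_scheme" and M :: "('a, 'c, 'e) module_scheme"
    and m :: "'a set" and d k l :: nat
  assumes "noetherian_ring R" and "local_ring R m"
    and "module R M" and "fin_gen_module R M"
    and "module_dim R M = enat d" and "d \<ge> 1"
    and "k > 0" and "l > 0"
  shows "\<exists>n3 > l.
    submod_colon M (submod_sum M (ideal_smult R M (ideal_pow R m n3) (carrier M)) (H0 R M m))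
                   (ideal_pow R m k)
    \<subseteq> submod_sum M (ideal_smult R M (ideal_pow R m l) (carrier M)) (H0 R M m)"
proof -
  have "maximalideal m R" using assms(2) unfolding local_ring_def by blast
  then have m: "ideal m R" by (simp add: maximalideal_def)
  show ?thesis using module.main_loc[OF assms(3) assms(1) m assms(4)] by blast
qed



end
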